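(* If $x\mapsto p(x)r(x)$ is increasing on $(a,b)$, then $|w_\lambda(x)|\le 1$ for all $x\in(a,b)$ and all $\lambda\ge 0$.
   Context: Let $-\infty\le a<b\le\infty$ and let $p,r:(a,b)\to(0,\infty)$ be functions such that $p,p',r,r'$ are locally absolutely continuous on $(a,b)$. Write $\ell u=-\frac{1}{r}(p u')'$ and $u^{[1]}=p u'$. It is assumed that $\int_a^c\int_y^c \frac{dx}{p(x)}\,r(y)\,dy<\infty$ for some $c\in(a,b)$. For $\lambda\in\mathbb C$, $w_\lambda$ denotes the unique solution of $\ell w=\lambda w$ on $(a,b)$ with $\lim_{x\downarrow a}w(x)=1$ and $\lim_{x\downarrow a}w^{[1]}(x)=0$. *)

theory Defs
  imports "HOL-Analysis.Analysis"
begin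

definition ointerval :: "ereal \<Rightarrow> ereal \<Rightarrow> real set" where
  "ointerval a b = {x. a < ereal x \<and> ereal x < b}"

definition absolutely_continuous_on :: "real set \<Rightarrow> (real \<Rightarrow> 'b::real_normed_vector) \<Rightarrow> bool" where
  "absolutely_continuous_on S f \<longleftrightarrow>
     (\<forall>\<epsilon>>0. \<exists>\<delta>>0. \<forall>(n::nat) (c::nat \<Rightarrow> real) (d::nat \<Rightarrow> real).
        (\<forall>i<n. c i \<le> d i \<and> {c i..d i} \<subseteq> S) \<and>
        disjoint_family_on (\<lambda>i. {c i<..<d i}) {..<n} \<and>
        (\<Sum>i<n. d i - c i) < \<delta>
        \<longrightarrow> (\<Sum>i<n. norm (f (d i) - f (c i))) < \<epsilon>)"

definition locally_ac_on :: "real set \<Rightarrow> (real \<Rightarrow> 'b::real_normed_vector) \<Rightarrow> bool" where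
  "locally_ac_on S f \<longleftrightarrow> (\<forall>c d. {c..d} \<subseteq> S \<longrightarrow> absolutely_continuous_on {c..d} f)"

definition at_left_end :: "ereal \<Rightarrow> real filter" where
  "at_left_end a = (if a = -\<infinity> then at_bot else at_right (real_of_ereal a))"

text \<open>w solves  -(1/r)(p w')' = lam w  on (a,b) (in the Caratheodory sense), with
  quasi-derivative w1 = p w', where w and w1 are locally absolutely continuous.\<close>
definition sl_solution ::
  "ereal \<Rightarrow> ereal \<Rightarrow> (real \<Rightarrow> real) \<Rightarrow> (real \<Rightarrow> real) \<Rightarrow> complex \<Rightarrow>
   (real \<Rightarrow> complex) \<Rightarrow> (real \<Rightarrow> complex) \<Rightarrow> bool" where
  "sl_solution a b p r lam w w1 \<longleftrightarrow>
     locally_ac_on (ointerval a b) w \<and> locally_ac_on (ointerval a b) w1 \<and>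
     (AE x in lebesgue. x \<in> ointerval a b \<longrightarrow>
        (w has_vector_derivative (w1 x / complex_of_real (p x))) (at x)) \<and>
     (AE x in lebesgue. x \<in> ointerval a b \<longrightarrow>
        (w1 has_vector_derivative (- (lam * complex_of_real (r x) * w x))) (at x))"

end

theory Submission
  imports Defs
begin
lemma ac_subset: "absolutely_continuous_on S f \<Longrightarrow> T \<subseteq> S \<Longrightarrow> absolutely_continuous_on T f"
  unfolding absolutely_continuous_on_def by (meson order_trans)

lemma acD:
  assumes "absolutely_continuous_on S f" "e > 0"
  obtains \<delta> where "\<delta> > 0" "\<And>(n::nat) (c::nat \<Rightarrow> real) (d::nat \<Rightarrow> real).
        \<forall>i<n. c i \<le> d i \<and> {c i..d i} \<subseteq> S \<Longrightarrow>
        disjoint_family_on (\<lambda>i. {c i<..<d i}) {..<n} \<Longrightarrow>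
        (\<Sum>i<n. d i - c i) < \<delta>
        \<Longrightarrow> (\<Sum>i<n. norm (f (d i) - f (c i))) < e"
proof -
  from assms obtain \<delta> where d: "\<delta> > 0" and H: "\<forall>(n::nat) (c::nat \<Rightarrow> real) (d::nat \<Rightarrow> real).
        (\<forall>i<n. c i \<le> d i \<and> {c i..d i} \<subseteq> S) \<and>
        disjoint_family_on (\<lambda>i. {c i<..<d i}) {..<n} \<and>
        (\<Sum>i<n. d i - c i) < \<delta>
        \<longrightarrow> (\<Sum>i<n. norm (f (d i) - f (c i))) < e"
    unfolding absolutely_continuous_on_def by blast
  show ?thesis
    by (rule that[OF d]) (use H in blast)
qed

lemma ac_finite:
  assumes "absolutely_continuous_on S f" "e > 0"
  obtains \<delta> where "\<delta> > 0" "\<And>(I::'i set) cc dd. finite I \<Longrightarrow> (\<forall>i\<in>I. cc i \<le> dd i \<and> {cc i..dd i} \<subseteq> S) \<Longrightarrow>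
      (\<forall>i\<in>I. \<forall>j\<in>I. i \<noteq> j \<longrightarrow> {cc i<..<dd i} \<inter> {cc j<..<dd j} = {}) \<Longrightarrow>
      (\<Sum>i\<in>I. dd i - cc i) < \<delta> \<Longrightarrow> (\<Sum>i\<in>I. norm (f (dd i) - f (cc i))) < e"
proof -
  obtain \<delta> where d: "\<delta> > 0" and H: "\<And>(n::nat) (c::nat \<Rightarrow> real) (d::nat \<Rightarrow> real).
        \<forall>i<n. c i \<le> d i \<and> {c i..d i} \<subseteq> S \<Longrightarrow>
        disjoint_family_on (\<lambda>i. {c i<..<d i}) {..<n} \<Longrightarrow>
        (\<Sum>i<n. d i - c i) < \<delta>
        \<Longrightarrow> (\<Sum>i<n. norm (f (d i) - f (c i))) < e"
    using acD[OF assms] by blast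
  show ?thesis
  proof (rule that[OF d])
    fix I :: "'i set" and cc dd
    assume fin: "finite I" and iv: "\<forall>i\<in>I. cc i \<le> dd i \<and> {cc i..dd i} \<subseteq> S"
      and dj: "\<forall>i\<in>I. \<forall>j\<in>I. i \<noteq> j \<longrightarrow> {cc i<..<dd i} \<inter> {cc j<..<dd j} = {}"
      and sm: "(\<Sum>i\<in>I. dd i - cc i) < \<delta>"
    obtain h where h: "bij_betw h {0..<card I} I" using ex_bij_betw_nat_finite[OF fin] by blast
    have eq1: "(\<Sum>i<card I. dd (h i) - cc (h i)) = (\<Sum>i\<in>I. dd i - cc i)"
      using sum.reindex_bij_betw[OF h, of "\<lambda>i. dd i - cc i"] by (simp add: atLeast0LessThan)
    have eq2: "(\<Sum>i<card I. norm (f (dd (h i)) - f (cc (h i)))) = (\<Sum>i\<in>I. norm (f (dd i) - f (cc i)))"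
      using sum.reindex_bij_betw[OF h, of "\<lambda>i. norm (f (dd i) - f (cc i))"] by (simp add: atLeast0LessThan)
    have hI: "\<And>i. i < card I \<Longrightarrow> h i \<in> I" using h by (auto simp: bij_betw_def)
    have "(\<Sum>i<card I. norm (f ((dd \<circ> h) i) - f ((cc \<circ> h) i))) < e"
    proof (rule H)
      show "\<forall>i<card I. (cc \<circ> h) i \<le> (dd \<circ> h) i \<and> {(cc \<circ> h) i..(dd \<circ> h) i} \<subseteq> S"
        using iv hI by auto
      show "disjoint_family_on (\<lambda>i. {(cc \<circ> h) i<..<(dd \<circ> h) i}) {..<card I}"
        unfolding disjoint_family_on_def
      proof (intro ballI impI)
        fix i j assume "i \<in> {..<card I}" "j \<in> {..<card I}" "i \<noteq> j"
        then have "h i \<noteq> h j" "h i \<in> I" "h j \<in> I" using h hI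
          by (auto simp: bij_betw_def inj_on_def)
        then show "{(cc \<circ> h) i<..<(dd \<circ> h) i} \<inter> {(cc \<circ> h) j<..<(dd \<circ> h) j} = {}"
          using dj by auto
      qed
      show "(\<Sum>i<card I. (dd \<circ> h) i - (cc \<circ> h) i) < \<delta>" using eq1 sm by simp
    qed
    then show "(\<Sum>i\<in>I. norm (f (dd i) - f (cc i))) < e" using eq2 by simp
  qed
qed

lemma lipschitz_imp_ac:
  fixes f :: "real \<Rightarrow> 'b::real_normed_vector"
  assumes L: "\<And>x y. x \<in> S \<Longrightarrow> y \<in> S \<Longrightarrow> x \<le> y \<Longrightarrow> norm (f y - f x) \<le> L * (y - x)"
  shows "absolutely_continuous_on S f"
  unfolding absolutely_continuous_on_def
proof (intro allI impI)
  fix e :: real assume e: "e > 0"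
  show "\<exists>\<delta>>0. \<forall>(n::nat) (c::nat \<Rightarrow> real) (d::nat \<Rightarrow> real).
        (\<forall>i<n. c i \<le> d i \<and> {c i..d i} \<subseteq> S) \<and>
        disjoint_family_on (\<lambda>i. {c i<..<d i}) {..<n} \<and>
        (\<Sum>i<n. d i - c i) < \<delta>
        \<longrightarrow> (\<Sum>i<n. norm (f (d i) - f (c i))) < e"
  proof (intro exI[of _ "e / (\<bar>L\<bar> + 1)"] conjI allI impI)
    show "e / (\<bar>L\<bar> + 1) > 0" using e by simp
    fix n :: nat and c d :: "nat \<Rightarrow> real"
    assume A: "(\<forall>i<n. c i \<le> d i \<and> {c i..d i} \<subseteq> S) \<and>
        disjoint_family_on (\<lambda>i. {c i<..<d i}) {..<n} \<and> (\<Sum>i<n. d i - c i) < e / (\<bar>L\<bar> + 1)"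
    have "(\<Sum>i<n. norm (f (d i) - f (c i))) \<le> (\<Sum>i<n. (\<bar>L\<bar> + 1) * (d i - c i))"
    proof (rule sum_mono)
      fix i assume "i \<in> {..<n}"
      then have "c i \<le> d i" "{c i..d i} \<subseteq> S" using A by auto
      then have "c i \<in> S" "d i \<in> S" by auto
      then have "norm (f (d i) - f (c i)) \<le> L * (d i - c i)" using L[of "c i" "d i"] \<open>c i \<le> d i\<close> by simp
      also have "\<dots> \<le> (\<bar>L\<bar> + 1) * (d i - c i)" using \<open>c i \<le> d i\<close>
        by (intro mult_right_mono) auto
      finally show "norm (f (d i) - f (c i)) \<le> (\<bar>L\<bar> + 1) * (d i - c i)" .
    qed
    also have "\<dots> = (\<bar>L\<bar> + 1) * (\<Sum>i<n. d i - c i)" by (simp add: sum_distrib_left)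
    also have "\<dots> < (\<bar>L\<bar> + 1) * (e / (\<bar>L\<bar> + 1))"
      using A by (intro mult_strict_left_mono) auto
    also have "\<dots> = e" by simp
    finally show "(\<Sum>i<n. norm (f (d i) - f (c i))) < e" .
  qed
qed

lemma ac_comp_lipschitz:
  fixes f :: "real \<Rightarrow> 'b::real_normed_vector" and g :: "'b \<Rightarrow> 'c::real_normed_vector"
  assumes ac: "absolutely_continuous_on S f" and T: "\<And>x. x \<in> S \<Longrightarrow> f x \<in> T"
    and L: "\<And>u v. u \<in> T \<Longrightarrow> v \<in> T \<Longrightarrow> norm (g u - g v) \<le> L * norm (u - v)"
  shows "absolutely_continuous_on S (\<lambda>x. g (f x))"
  unfolding absolutely_continuous_on_def
proof (intro allI impI)
  fix e :: real assume e: "e > 0"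
  then have "e / (\<bar>L\<bar> + 1) > 0" by simp
  with ac obtain \<delta> where d: "\<delta> > 0" and H: "\<And>(n::nat) (c::nat \<Rightarrow> real) (d::nat \<Rightarrow> real).
        \<forall>i<n. c i \<le> d i \<and> {c i..d i} \<subseteq> S \<Longrightarrow>
        disjoint_family_on (\<lambda>i. {c i<..<d i}) {..<n} \<Longrightarrow>
        (\<Sum>i<n. d i - c i) < \<delta>
        \<Longrightarrow> (\<Sum>i<n. norm (f (d i) - f (c i))) < e / (\<bar>L\<bar> + 1)"
    by (rule acD) blast
  show "\<exists>\<delta>>0. \<forall>(n::nat) (c::nat \<Rightarrow> real) (d::nat \<Rightarrow> real).
        (\<forall>i<n. c i \<le> d i \<and> {c i..d i} \<subseteq> S) \<and>
        disjoint_family_on (\<lambda>i. {c i<..<d i}) {..<n} \<and>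
        (\<Sum>i<n. d i - c i) < \<delta>
        \<longrightarrow> (\<Sum>i<n. norm (g (f (d i)) - g (f (c i)))) < e"
  proof (intro exI[of _ \<delta>] conjI allI impI d)
    fix n :: nat and c d :: "nat \<Rightarrow> real"
    assume A: "(\<forall>i<n. c i \<le> d i \<and> {c i..d i} \<subseteq> S) \<and>
        disjoint_family_on (\<lambda>i. {c i<..<d i}) {..<n} \<and> (\<Sum>i<n. d i - c i) < \<delta>"
    have "(\<Sum>i<n. norm (g (f (d i)) - g (f (c i)))) \<le> (\<Sum>i<n. (\<bar>L\<bar> + 1) * norm (f (d i) - f (c i)))"
    proof (rule sum_mono)
      fix i assume "i \<in> {..<n}"
      then have "c i \<le> d i" "{c i..d i} \<subseteq> S" using A by auto
      then have "c i \<in> S" "d i \<in> S" by auto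
      then have "norm (g (f (d i)) - g (f (c i))) \<le> L * norm (f (d i) - f (c i))" using L[of "f (d i)" "f (c i)"] T by simp
      also have "\<dots> \<le> (\<bar>L\<bar> + 1) * norm (f (d i) - f (c i))"
        by (intro mult_right_mono) auto
      finally show "norm (g (f (d i)) - g (f (c i))) \<le> (\<bar>L\<bar> + 1) * norm (f (d i) - f (c i))" .
    qed
    also have "\<dots> = (\<bar>L\<bar> + 1) * (\<Sum>i<n. norm (f (d i) - f (c i)))" by (simp add: sum_distrib_left)
    also have "\<dots> < (\<bar>L\<bar> + 1) * (e / (\<bar>L\<bar> + 1))"
      using H A by (intro mult_strict_left_mono) auto
    also have "\<dots> = e" by simp
    finally show "(\<Sum>i<n. norm (g (f (d i)) - g (f (c i)))) < e" .
  qed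
qed

lemma ac_add:
  fixes f g :: "real \<Rightarrow> 'b::real_normed_vector"
  assumes f: "absolutely_continuous_on S f" and g: "absolutely_continuous_on S g"
  shows "absolutely_continuous_on S (\<lambda>x. f x + g x)"
  unfolding absolutely_continuous_on_def
proof (intro allI impI)
  fix e :: real assume e: "e > 0"
  then have e2: "e/2 > 0" by simp
  obtain \<delta>1 where d1: "\<delta>1 > 0" and H1: "\<And>(n::nat) (c::nat \<Rightarrow> real) (d::nat \<Rightarrow> real).
        \<forall>i<n. c i \<le> d i \<and> {c i..d i} \<subseteq> S \<Longrightarrow>
        disjoint_family_on (\<lambda>i. {c i<..<d i}) {..<n} \<Longrightarrow>
        (\<Sum>i<n. d i - c i) < \<delta>1
        \<Longrightarrow> (\<Sum>i<n. norm (f (d i) - f (c i))) < e/2"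
    using acD[OF f e2] by blast
  obtain \<delta>2 where d2: "\<delta>2 > 0" and H2: "\<And>(n::nat) (c::nat \<Rightarrow> real) (d::nat \<Rightarrow> real).
        \<forall>i<n. c i \<le> d i \<and> {c i..d i} \<subseteq> S \<Longrightarrow>
        disjoint_family_on (\<lambda>i. {c i<..<d i}) {..<n} \<Longrightarrow>
        (\<Sum>i<n. d i - c i) < \<delta>2
        \<Longrightarrow> (\<Sum>i<n. norm (g (d i) - g (c i))) < e/2"
    using acD[OF g e2] by blast
  show "\<exists>\<delta>>0. \<forall>(n::nat) (c::nat \<Rightarrow> real) (d::nat \<Rightarrow> real).
        (\<forall>i<n. c i \<le> d i \<and> {c i..d i} \<subseteq> S) \<and>
        disjoint_family_on (\<lambda>i. {c i<..<d i}) {..<n} \<and>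
        (\<Sum>i<n. d i - c i) < \<delta>
        \<longrightarrow> (\<Sum>i<n. norm ((f (d i) + g (d i)) - (f (c i) + g (c i)))) < e"
  proof (intro exI[of _ "min \<delta>1 \<delta>2"] conjI allI impI)
    show "min \<delta>1 \<delta>2 > 0" using d1 d2 by simp
    fix n :: nat and c d :: "nat \<Rightarrow> real"
    assume A: "(\<forall>i<n. c i \<le> d i \<and> {c i..d i} \<subseteq> S) \<and>
        disjoint_family_on (\<lambda>i. {c i<..<d i}) {..<n} \<and> (\<Sum>i<n. d i - c i) < min \<delta>1 \<delta>2"
    have "(\<Sum>i<n. norm ((f (d i) + g (d i)) - (f (c i) + g (c i))))
        \<le> (\<Sum>i<n. norm (f (d i) - f (c i)) + norm (g (d i) - g (c i)))"
      by (intro sum_mono) (simp only: add_diff_add norm_triangle_ineq)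
    also have "\<dots> = (\<Sum>i<n. norm (f (d i) - f (c i))) + (\<Sum>i<n. norm (g (d i) - g (c i)))"
      by (simp add: sum.distrib)
    also have "\<dots> < e/2 + e/2" using A H1 H2 by (intro add_strict_mono) auto
    finally show "(\<Sum>i<n. norm ((f (d i) + g (d i)) - (f (c i) + g (c i)))) < e" by simp
  qed
qed


lemma ac_continuous:
  fixes f :: "real \<Rightarrow> 'b::real_normed_vector"
  assumes ac: "absolutely_continuous_on {a..b} f"
  shows "continuous_on {a..b} f"
  unfolding continuous_on_iff
proof (intro ballI allI impI)
  fix x and e :: real assume x: "x \<in> {a..b}" and e: "e > 0"
  obtain \<delta> where d: "\<delta> > 0" and H: "\<And>(n::nat) (c::nat \<Rightarrow> real) (d::nat \<Rightarrow> real).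
        \<forall>i<n. c i \<le> d i \<and> {c i..d i} \<subseteq> {a..b} \<Longrightarrow>
        disjoint_family_on (\<lambda>i. {c i<..<d i}) {..<n} \<Longrightarrow>
        (\<Sum>i<n. d i - c i) < \<delta>
        \<Longrightarrow> (\<Sum>i<n. norm (f (d i) - f (c i))) < e"
    using acD[OF ac e] by blast
  show "\<exists>d>0. \<forall>x'\<in>{a..b}. dist x' x < d \<longrightarrow> dist (f x') (f x) < e"
  proof (intro exI[of _ \<delta>] conjI ballI impI d)
    fix y assume y: "y \<in> {a..b}" "dist y x < \<delta>"
    define cc where "cc = (\<lambda>i::nat. min x y)"
    define dd where "dd = (\<lambda>i::nat. max x y)"
    have "(\<Sum>i<1. norm (f (dd i) - f (cc i))) < e"
      by (rule H) (use x y in \<open>auto simp: cc_def dd_def dist_real_def disjoint_family_on_def\<close>)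
    then show "dist (f y) (f x) < e"
      by (cases "x \<le> y") (auto simp: cc_def dd_def dist_norm norm_minus_commute)
  qed
qed

lemma ac_bounded:
  fixes f :: "real \<Rightarrow> 'b::real_normed_vector"
  assumes ac: "absolutely_continuous_on {a..b} f"
  obtains B where "B > 0" "\<And>x. x \<in> {a..b} \<Longrightarrow> norm (f x) \<le> B"
proof -
  have "compact (f ` {a..b})"
    by (rule compact_continuous_image[OF ac_continuous[OF ac]]) simp
  then have "bounded (f ` {a..b})" by (rule compact_imp_bounded)
  then obtain B where B: "\<And>x. x \<in> {a..b} \<Longrightarrow> norm (f x) \<le> B"
    unfolding bounded_iff by blast
  show ?thesis
    by (rule that[of "\<bar>B\<bar> + 1"]) (use B in \<open>force+\<close>)
qed

lemma ac_mult:
  fixes f g :: "real \<Rightarrow> real"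
  assumes f: "absolutely_continuous_on {a..b} f" and g: "absolutely_continuous_on {a..b} g"
  shows "absolutely_continuous_on {a..b} (\<lambda>x. f x * g x)"
  unfolding absolutely_continuous_on_def
proof (intro allI impI)
  fix e :: real assume e: "e > 0"
  obtain B1 where B1: "B1 > 0" "\<And>x. x \<in> {a..b} \<Longrightarrow> norm (f x) \<le> B1" using ac_bounded[OF f] by blast
  obtain B2 where B2: "B2 > 0" "\<And>x. x \<in> {a..b} \<Longrightarrow> norm (g x) \<le> B2" using ac_bounded[OF g] by blast
  define B where "B = B1 + B2"
  have B: "B > 0" "\<And>x. x \<in> {a..b} \<Longrightarrow> \<bar>f x\<bar> \<le> B" "\<And>x. x \<in> {a..b} \<Longrightarrow> \<bar>g x\<bar> \<le> B"
    using B1 B2 by (force simp: B_def)+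
  have e2: "e/(2*B) > 0" using e B by simp
  obtain \<delta>1 where d1: "\<delta>1 > 0" and H1: "\<And>(n::nat) (c::nat \<Rightarrow> real) (d::nat \<Rightarrow> real).
        \<forall>i<n. c i \<le> d i \<and> {c i..d i} \<subseteq> {a..b} \<Longrightarrow>
        disjoint_family_on (\<lambda>i. {c i<..<d i}) {..<n} \<Longrightarrow>
        (\<Sum>i<n. d i - c i) < \<delta>1
        \<Longrightarrow> (\<Sum>i<n. norm (f (d i) - f (c i))) < e/(2*B)"
    using acD[OF f e2] by blast
  obtain \<delta>2 where d2: "\<delta>2 > 0" and H2: "\<And>(n::nat) (c::nat \<Rightarrow> real) (d::nat \<Rightarrow> real).
        \<forall>i<n. c i \<le> d i \<and> {c i..d i} \<subseteq> {a..b} \<Longrightarrow>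
        disjoint_family_on (\<lambda>i. {c i<..<d i}) {..<n} \<Longrightarrow>
        (\<Sum>i<n. d i - c i) < \<delta>2
        \<Longrightarrow> (\<Sum>i<n. norm (g (d i) - g (c i))) < e/(2*B)"
    using acD[OF g e2] by blast
  show "\<exists>\<delta>>0. \<forall>(n::nat) (c::nat \<Rightarrow> real) (d::nat \<Rightarrow> real).
        (\<forall>i<n. c i \<le> d i \<and> {c i..d i} \<subseteq> {a..b}) \<and>
        disjoint_family_on (\<lambda>i. {c i<..<d i}) {..<n} \<and>
        (\<Sum>i<n. d i - c i) < \<delta>
        \<longrightarrow> (\<Sum>i<n. norm (f (d i) * g (d i) - f (c i) * g (c i))) < e"
  proof (intro exI[of _ "min \<delta>1 \<delta>2"] conjI allI impI)
    show "min \<delta>1 \<delta>2 > 0" using d1 d2 by simp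
    fix n :: nat and c d :: "nat \<Rightarrow> real"
    assume A: "(\<forall>i<n. c i \<le> d i \<and> {c i..d i} \<subseteq> {a..b}) \<and>
        disjoint_family_on (\<lambda>i. {c i<..<d i}) {..<n} \<and> (\<Sum>i<n. d i - c i) < min \<delta>1 \<delta>2"
    have "(\<Sum>i<n. norm (f (d i) * g (d i) - f (c i) * g (c i)))
        \<le> (\<Sum>i<n. B * norm (g (d i) - g (c i)) + B * norm (f (d i) - f (c i)))"
    proof (rule sum_mono)
      fix i assume "i \<in> {..<n}"
      then have "c i \<le> d i" "{c i..d i} \<subseteq> {a..b}" using A by auto
      then have ci: "c i \<in> {a..b}" and di: "d i \<in> {a..b}" by auto
      have eq: "f (d i) * g (d i) - f (c i) * g (c i) = f (d i) * (g (d i) - g (c i)) + g (c i) * (f (d i) - f (c i))"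
        by (simp add: algebra_simps)
      have "\<bar>f (d i) * (g (d i) - g (c i))\<bar> \<le> B * \<bar>g (d i) - g (c i)\<bar>"
        unfolding abs_mult by (rule mult_right_mono) (use B di in auto)
      moreover have "\<bar>g (c i) * (f (d i) - f (c i))\<bar> \<le> B * \<bar>f (d i) - f (c i)\<bar>"
        unfolding abs_mult by (rule mult_right_mono) (use B ci in auto)
      ultimately show "norm (f (d i) * g (d i) - f (c i) * g (c i)) \<le> B * norm (g (d i) - g (c i)) + B * norm (f (d i) - f (c i))"
        unfolding eq real_norm_def by linarith
    qed
    also have "\<dots> = B * (\<Sum>i<n. norm (g (d i) - g (c i))) + B * (\<Sum>i<n. norm (f (d i) - f (c i)))"
      by (simp add: sum.distrib sum_distrib_left)
    also have "\<dots> < B * (e/(2*B)) + B * (e/(2*B))"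
      using A H1 H2 B by (intro add_strict_mono mult_strict_left_mono) auto
    also have "\<dots> = e" using B by simp
    finally show "(\<Sum>i<n. norm (f (d i) * g (d i) - f (c i) * g (c i))) < e" .
  qed
qed

lemma ac_const: "absolutely_continuous_on S (\<lambda>x. k)"
  by (rule lipschitz_imp_ac[of _ _ 0]) auto

lemma ac_scale:
  fixes f :: "real \<Rightarrow> real"
  assumes "absolutely_continuous_on S f"
  shows "absolutely_continuous_on S (\<lambda>x. k * f x)"
  by (rule ac_comp_lipschitz[OF assms, of UNIV _ "\<bar>k\<bar>"]) (auto simp: abs_mult[symmetric] algebra_simps)

lemma ac_diff:
  fixes f g :: "real \<Rightarrow> real"
  assumes "absolutely_continuous_on S f" "absolutely_continuous_on S g"
  shows "absolutely_continuous_on S (\<lambda>x. f x - g x)"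
  using ac_add[OF assms(1) ac_scale[OF assms(2), of "-1"]] by simp

lemma deriv_approx:
  fixes F :: "real \<Rightarrow> real"
  assumes "(F has_real_derivative D) (at x)" "e > 0"
  shows "\<exists>r>0. \<forall>y. \<bar>y - x\<bar> < r \<longrightarrow> \<bar>F y - F x - D * (y - x)\<bar> \<le> e * \<bar>y - x\<bar>"
  using assms(1) unfolding has_field_derivative_def has_derivative_at_alt
  using assms(2) by (simp add: mult.commute)

lemma negligible_cbox_inter:
  fixes u1 v1 u2 v2 :: real
  assumes "{u1<..<v1} \<inter> {u2<..<v2} = {}"
  shows "negligible ({u1..v1} \<inter> {u2..v2})"
proof (rule negligible_subset[of "{u1,v1,u2,v2}"])
  show "negligible {u1, v1, u2, v2}" by (rule negligible_finite) simp
  show "{u1..v1} \<inter> {u2..v2} \<subseteq> {u1, v1, u2, v2}"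
  proof
    fix z assume z: "z \<in> {u1..v1} \<inter> {u2..v2}"
    show "z \<in> {u1, v1, u2, v2}"
    proof (rule ccontr)
      assume "z \<notin> {u1, v1, u2, v2}"
      then have "z \<in> {u1<..<v1} \<inter> {u2<..<v2}" using z by auto
      then show False using assms by blast
    qed
  qed
qed


lemma ac_nonpos_deriv:
  fixes F :: "real \<Rightarrow> real"
  assumes cd: "c \<le> d" and ac: "absolutely_continuous_on {c..d} F" and N: "negligible N"
    and der: "\<And>x. x \<in> {c<..<d} \<Longrightarrow> x \<notin> N \<Longrightarrow> \<exists>D. (F has_real_derivative D) (at x) \<and> D \<le> 0"
  shows "F d \<le> F c"
proof -
  have main: "F d - F c \<le> e * (d - c) + e" if e: "e > 0" for e
  proof -
    obtain \<delta> where \<delta>: "\<delta> > 0" and H: "\<And>(I::(real \<times> real set) set) cc dd. finite I \<Longrightarrow>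
      (\<forall>i\<in>I. cc i \<le> dd i \<and> {cc i..dd i} \<subseteq> {c..d}) \<Longrightarrow>
      (\<forall>i\<in>I. \<forall>j\<in>I. i \<noteq> j \<longrightarrow> {cc i<..<dd i} \<inter> {cc j<..<dd j} = {}) \<Longrightarrow>
      (\<Sum>i\<in>I. dd i - cc i) < \<delta> \<Longrightarrow> (\<Sum>i\<in>I. norm (F (dd i) - F (cc i))) < e"
      by (rule ac_finite[where 'i="real \<times> real set", OF ac e]) (rule that)
    define M where "M = N \<union> {c, d}"
    have negM: "negligible M" unfolding M_def
      by (intro negligible_Un N negligible_finite) simp
    obtain U where U: "open U" "M \<subseteq> U" "(U - M) \<in> lmeasurable" "emeasure lebesgue (U - M) < ennreal \<delta>"
      by (rule sets_lebesgue_outer_open[OF negligible_imp_sets[OF negM] \<delta>])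
    have sd: "negligible (sym_diff (U - M) U)"
      by (rule negligible_subset[OF negM]) auto
    have Ulm: "U \<in> lmeasurable" using lmeasurable_negligible_symdiff[OF U(3) sd] .
    have "measure lebesgue (U - M) < \<delta>"
      using U(3,4) by (simp add: emeasure_eq_measure2 ennreal_less_iff)
    then have mU: "measure lebesgue U < \<delta>"
      using measure_negligible_symdiff[OF U(3) sd] by simp
    have "\<forall>x. \<exists>\<rho>>0. (x \<in> M \<longrightarrow> ball x \<rho> \<subseteq> U) \<and>
        (x \<in> {c<..<d} \<and> x \<notin> N \<longrightarrow> (\<exists>D\<le>0. \<forall>y. \<bar>y - x\<bar> < \<rho> \<longrightarrow> \<bar>F y - F x - D*(y-x)\<bar> \<le> e*\<bar>y-x\<bar>))"
    proof
      fix x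
      show "\<exists>\<rho>>0. (x \<in> M \<longrightarrow> ball x \<rho> \<subseteq> U) \<and>
        (x \<in> {c<..<d} \<and> x \<notin> N \<longrightarrow> (\<exists>D\<le>0. \<forall>y. \<bar>y - x\<bar> < \<rho> \<longrightarrow> \<bar>F y - F x - D*(y-x)\<bar> \<le> e*\<bar>y-x\<bar>))"
      proof (cases "x \<in> M")
        case True
        then obtain \<rho> where \<rho>: "\<rho> > 0" "ball x \<rho> \<subseteq> U" using U(1,2) open_contains_ball by blast
        have "\<not> (x \<in> {c<..<d} \<and> x \<notin> N)" using True by (auto simp: M_def)
        then show ?thesis using \<rho> by blast
      next
        case False
        show ?thesis
        proof (cases "x \<in> {c<..<d}")
          case True
          with False have "x \<notin> N" by (simp add: M_def)
          then obtain D where D: "(F has_real_derivative D) (at x)" "D \<le> 0" using der True by blast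
          obtain \<rho> where \<rho>: "\<rho> > 0" "\<forall>y. \<bar>y - x\<bar> < \<rho> \<longrightarrow> \<bar>F y - F x - D * (y - x)\<bar> \<le> e * \<bar>y - x\<bar>"
            using deriv_approx[OF D(1) e] by blast
          show ?thesis
            by (rule exI[of _ \<rho>]) (use \<rho> D False in blast)
        next
          case False
          show ?thesis
            by (rule exI[of _ 1]) (use False \<open>x \<notin> M\<close> in auto)
        qed
      qed
    qed
    from choice[OF this] obtain \<rho> where \<rho>: "\<forall>x. \<rho> x > 0 \<and> (x \<in> M \<longrightarrow> ball x (\<rho> x) \<subseteq> U) \<and>
        (x \<in> {c<..<d} \<and> x \<notin> N \<longrightarrow> (\<exists>D\<le>0. \<forall>y. \<bar>y - x\<bar> < \<rho> x \<longrightarrow> \<bar>F y - F x - D*(y-x)\<bar> \<le> e*\<bar>y-x\<bar>))"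
      by blast
    have gauge: "gauge (\<lambda>x. ball x (\<rho> x))" using \<rho> by (intro gauge_ball_dependent) blast
    obtain p where p: "p tagged_division_of {c..d}" "(\<lambda>x. ball x (\<rho> x)) fine p"
      using fine_division_exists_real[OF gauge] by blast
    have finp: "finite p" using p(1) by (rule tagged_division_ofD(1))
    have Kform: "\<exists>u v. K = {u..v} \<and> u \<le> v \<and> x \<in> K \<and> K \<subseteq> {c..d} \<and> K \<subseteq> ball x (\<rho> x)"
      if xK: "(x,K) \<in> p" for x K
    proof -
      obtain u v where K: "K = cbox u v" using tagged_division_ofD(4)[OF p(1) xK] by blast
      have "x \<in> K" "K \<subseteq> {c..d}" using tagged_division_ofD(2,3)[OF p(1) xK] by auto
      moreover have "K \<subseteq> ball x (\<rho> x)" using p(2) xK unfolding fine_def by blast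
      moreover have "u \<le> v" using \<open>x \<in> K\<close> K by auto
      ultimately show ?thesis using K by auto
    qed
    define p1 where "p1 = {z\<in>p. fst z \<in> M}"
    define p2 where "p2 = {z\<in>p. fst z \<notin> M}"
    have fin12: "finite p1" "finite p2" using finp by (auto simp: p1_def p2_def)
    have p12: "p = p1 \<union> p2" "p1 \<inter> p2 = {}" by (auto simp: p1_def p2_def)
    have "F d - F c = (\<Sum>(x,K)\<in>p. F (Sup K) - F (Inf K))"
      using additive_tagged_division_1[OF cd p(1), of F] by simp
    also have "\<dots> = (\<Sum>(x,K)\<in>p1. F (Sup K) - F (Inf K)) + (\<Sum>(x,K)\<in>p2. F (Sup K) - F (Inf K))"
      unfolding p12(1) by (rule sum.union_disjoint[OF fin12 p12(2)])
    finally have split: "F d - F c = (\<Sum>(x,K)\<in>p1. F (Sup K) - F (Inf K)) + (\<Sum>(x,K)\<in>p2. F (Sup K) - F (Inf K))" .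
    have b2: "(\<Sum>(x,K)\<in>p2. F (Sup K) - F (Inf K)) \<le> (\<Sum>(x,K)\<in>p2. e * measure lborel K)"
    proof (rule sum_mono, clarify)
      fix x K assume xK2: "(x,K) \<in> p2"
      then have xK: "(x,K) \<in> p" and xM: "x \<notin> M" by (auto simp: p2_def)
      obtain u v where uv: "K = {u..v}" "u \<le> v" "x \<in> K" "K \<subseteq> {c..d}" "K \<subseteq> ball x (\<rho> x)"
        using Kform[OF xK] by blast
      have "x \<in> {c<..<d}" "x \<notin> N" using uv xM by (auto simp: M_def)
      then obtain D where D: "D \<le> 0" and appr: "\<forall>y. \<bar>y - x\<bar> < \<rho> x \<longrightarrow> \<bar>F y - F x - D*(y-x)\<bar> \<le> e*\<bar>y-x\<bar>"
        using \<rho> by blast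
      have ux: "u \<le> x" "x \<le> v" using uv by auto
      have "u \<in> K" "v \<in> K" using uv(1,2) by auto
      then have "u \<in> ball x (\<rho> x)" "v \<in> ball x (\<rho> x)" using uv(5) by (auto simp del: mem_ball)
      then have "\<bar>u - x\<bar> < \<rho> x" "\<bar>v - x\<bar> < \<rho> x" by (auto simp: dist_real_def abs_minus_commute)
      then have A1: "\<bar>F u - F x - D*(u-x)\<bar> \<le> e*\<bar>u-x\<bar>" and A2: "\<bar>F v - F x - D*(v-x)\<bar> \<le> e*\<bar>v-x\<bar>"
        using appr by auto
      have "D*(v-x) \<le> 0" using D ux by (simp add: mult_nonpos_nonneg)
      moreover have "D*(u-x) \<ge> 0" using D ux by (simp add: mult_nonpos_nonpos)
      ultimately have "F v - F u \<le> e * (v - x) + e * (x - u)"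
        using A1 A2 ux by (auto simp: abs_le_iff)
      also have "\<dots> = e * (v - u)" by (simp add: algebra_simps)
      finally show "F (Sup K) - F (Inf K) \<le> e * measure lborel K"
        using uv by simp
    qed
    also have "\<dots> \<le> (\<Sum>(x,K)\<in>p. e * measure lborel K)"
      by (rule sum_mono2[OF finp]) (use e in \<open>auto simp: p2_def\<close>)
    also have "\<dots> = e * (\<Sum>(x,K)\<in>p. measure lborel K)"
      by (simp add: sum_distrib_left case_prod_unfold)
    also have "(\<Sum>(x,K)\<in>p. measure lborel K) = d - c"
      using additive_content_tagged_division[of p c d] p(1) cd by simp
    finally have b2': "(\<Sum>(x,K)\<in>p2. F (Sup K) - F (Inf K)) \<le> e * (d - c)" .
    have b1: "(\<Sum>(x,K)\<in>p1. F (Sup K) - F (Inf K)) < e"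
    proof -
      have iv: "\<forall>z\<in>p1. Inf (snd z) \<le> Sup (snd z) \<and> {Inf (snd z)..Sup (snd z)} = snd z \<and> snd z \<subseteq> {c..d}
           \<and> snd z \<subseteq> U"
      proof
        fix z assume z: "z \<in> p1"
        obtain x K where zz: "z = (x,K)" by (cases z)
        then have xK: "(x,K) \<in> p" and xM: "x \<in> M" using z by (auto simp: p1_def)
        obtain u v where uv: "K = {u..v}" "u \<le> v" "x \<in> K" "K \<subseteq> {c..d}" "K \<subseteq> ball x (\<rho> x)"
          using Kform[OF xK] by blast
        have "ball x (\<rho> x) \<subseteq> U" using \<rho> xM by blast
        then show "Inf (snd z) \<le> Sup (snd z) \<and> {Inf (snd z)..Sup (snd z)} = snd z \<and> snd z \<subseteq> {c..d} \<and> snd z \<subseteq> U"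
          using uv zz by auto
      qed
      have dj: "\<forall>i\<in>p1. \<forall>j\<in>p1. i \<noteq> j \<longrightarrow> {Inf (snd i)<..<Sup (snd i)} \<inter> {Inf (snd j)<..<Sup (snd j)} = {}"
      proof (intro ballI impI)
        fix i j assume i: "i \<in> p1" and j: "j \<in> p1" and ij: "i \<noteq> j"
        have "interior (snd i) \<inter> interior (snd j) = {}"
          using tagged_division_ofD(5)[OF p(1), of "fst i" "snd i" "fst j" "snd j"] i j ij
          by (auto simp: p1_def)
        moreover have "snd i = {Inf (snd i)..Sup (snd i)}" "snd j = {Inf (snd j)..Sup (snd j)}"
          using iv i j by auto
        ultimately show "{Inf (snd i)<..<Sup (snd i)} \<inter> {Inf (snd j)<..<Sup (snd j)} = {}"
          by (metis interior_atLeastAtMost_real)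
      qed
      have meas_eq: "(\<Sum>z\<in>p1. Sup (snd z) - Inf (snd z)) = (\<Sum>z\<in>p1. measure lebesgue (snd z))"
      proof (rule sum.cong[OF refl])
        fix z assume "z \<in> p1"
        then have e1: "snd z = {Inf (snd z)..Sup (snd z)}" and le: "Inf (snd z) \<le> Sup (snd z)" using iv by auto
        have F: "measure lebesgue {Inf (snd z)..Sup (snd z)} = Sup (snd z) - Inf (snd z)" using le by simp
        show "Sup (snd z) - Inf (snd z) = measure lebesgue (snd z)"
          using F unfolding e1[symmetric] by simp
      qed
      also have "\<dots> = measure lebesgue (\<Union>(snd ` p1))"
      proof (rule measure_negligible_finite_Union_image[symmetric, OF fin12(1)])
        fix z assume "z \<in> p1"
        then have "snd z = {Inf (snd z)..Sup (snd z)}" using iv by auto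
        then show "snd z \<in> lmeasurable" by (metis lmeasurable_cbox cbox_interval)
      next
        show "pairwise (\<lambda>x y. negligible (snd x \<inter> snd y)) p1"
          unfolding pairwise_def
        proof (intro ballI impI)
          fix i j assume i: "i \<in> p1" and j: "j \<in> p1" and ij: "i \<noteq> j"
          have "snd i = {Inf (snd i)..Sup (snd i)}" "snd j = {Inf (snd j)..Sup (snd j)}"
            using iv i j by auto
          then show "negligible (snd i \<inter> snd j)"
            using negligible_cbox_inter dj i j ij by metis
        qed
      qed
      also have "\<dots> \<le> measure lebesgue U"
      proof (rule measure_mono_fmeasurable)
        show "\<Union>(snd ` p1) \<subseteq> U" using iv by auto
        show "\<Union>(snd ` p1) \<in> sets lebesgue"
        proof (rule sets.finite_UN[OF fin12(1)])
          fix z assume "z \<in> p1"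
          then have e1: "snd z = {Inf (snd z)..Sup (snd z)}" using iv by auto
          have "{Inf (snd z)..Sup (snd z)} \<in> sets lebesgue"
            by (metis lmeasurable_cbox cbox_interval fmeasurableD)
          then show "snd z \<in> sets lebesgue" using e1 by simp
        qed
        show "U \<in> fmeasurable lebesgue" using Ulm .
      qed
      finally have "(\<Sum>z\<in>p1. Sup (snd z) - Inf (snd z)) < \<delta>" using mU by linarith
      then have "(\<Sum>z\<in>p1. norm (F (Sup (snd z)) - F (Inf (snd z)))) < e"
        using H[OF fin12(1) _ dj] iv by auto
      moreover have "(\<Sum>(x,K)\<in>p1. F (Sup K) - F (Inf K)) \<le> (\<Sum>z\<in>p1. norm (F (Sup (snd z)) - F (Inf (snd z))))"
        by (rule sum_mono) auto
      ultimately show ?thesis by linarith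
    qed
    show ?thesis using split b1 b2' by linarith
  qed
  show ?thesis
  proof (rule ccontr)
    assume "\<not> F d \<le> F c"
    then have pos: "F d - F c > 0" by simp
    define e where "e = (F d - F c) / (2 * (d - c + 1))"
    have e: "e > 0" using pos cd by (simp add: e_def)
    have "e * (d - c) + e = e * (d - c + 1)" by (simp add: algebra_simps)
    also have "\<dots> = (F d - F c) / 2" unfolding e_def using cd by (simp add: field_simps)
    finally have eq: "e * (d - c) + e = (F d - F c) / 2" .
    have "F d - F c \<le> (F d - F c) / 2" using main[OF e] unfolding eq .
    then show False using pos by (simp add: field_simps)
  qed
qed

lemma ac_nonneg_deriv:
  fixes F :: "real \<Rightarrow> real"
  assumes cd: "c \<le> d" and ac: "absolutely_continuous_on {c..d} F" and N: "negligible N"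
    and der: "\<And>x. x \<in> {c<..<d} \<Longrightarrow> x \<notin> N \<Longrightarrow> \<exists>D. (F has_real_derivative D) (at x) \<and> D \<ge> 0"
  shows "F c \<le> F d"
proof -
  have "(\<lambda>x. - F x) d \<le> (\<lambda>x. - F x) c"
  proof (rule ac_nonpos_deriv[OF cd _ N])
    show "absolutely_continuous_on {c..d} (\<lambda>x. - F x)"
      using ac_scale[OF ac, of "-1"] by simp
    fix x assume "x \<in> {c<..<d}" "x \<notin> N"
    then obtain D where "(F has_real_derivative D) (at x)" "D \<ge> 0" using der by blast
    then show "\<exists>D. ((\<lambda>x. - F x) has_real_derivative D) (at x) \<and> D \<le> 0"
      by (intro exI[of _ "-D"]) (auto intro: DERIV_minus)
  qed
  then show ?thesis by simp
qed

lemma ac_pos_min: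
  fixes q :: "real \<Rightarrow> real"
  assumes ac: "absolutely_continuous_on {c..d} q" and pos: "\<And>t. t \<in> {c..d} \<Longrightarrow> q t > 0"
  obtains m where "m > 0" "\<And>t. t \<in> {c..d} \<Longrightarrow> m \<le> q t"
proof (cases "c \<le> d")
  case True
  obtain t0 where t0: "t0 \<in> {c..d}" "\<And>t. t \<in> {c..d} \<Longrightarrow> q t0 \<le> q t"
    using continuous_attains_inf[OF compact_Icc _ ac_continuous[OF ac]] True by auto
  show ?thesis by (rule that[of "q t0"]) (use t0 pos in auto)
next
  case False
  show ?thesis by (rule that[of 1]) (use False in auto)
qed

lemma ac_inverse:
  fixes q :: "real \<Rightarrow> real"
  assumes ac: "absolutely_continuous_on {c..d} q" and pos: "\<And>t. t \<in> {c..d} \<Longrightarrow> q t > 0"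
  shows "absolutely_continuous_on {c..d} (\<lambda>t. 1 / q t)"
proof -
  obtain m where m: "m > 0" "\<And>t. t \<in> {c..d} \<Longrightarrow> m \<le> q t" using ac_pos_min[OF ac pos] by blast
  show ?thesis
  proof (rule ac_comp_lipschitz[OF ac, of "{m..}" _ "1/m^2"])
    show "\<And>x. x \<in> {c..d} \<Longrightarrow> q x \<in> {m..}" using m by auto
    fix u v :: real assume u: "u \<in> {m..}" and v: "v \<in> {m..}"
    then have up: "u > 0" "v > 0" using m by auto
    have "norm (1/u - 1/v) = \<bar>v - u\<bar> / (u * v)" using up by (simp add: field_simps abs_div)
    also have "\<dots> \<le> \<bar>v - u\<bar> / (m * m)"
      using u v m up by (intro divide_left_mono mult_mono) auto
    also have "\<dots> = 1/m^2 * norm (u - v)" by (simp add: power2_eq_square abs_minus_commute)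
    finally show "norm (1/u - 1/v) \<le> 1/m^2 * norm (u - v)" .
  qed
qed

lemma ln_lipschitz:
  fixes u v m :: real
  assumes "m > 0" "m \<le> u" "m \<le> v"
  shows "\<bar>ln u - ln v\<bar> \<le> 1/m * \<bar>u - v\<bar>"
proof -
  have key: "ln x - ln y \<le> 1/m * (x - y)" if "m \<le> y" "y \<le> x" for x y
  proof -
    have pos: "x > 0" "y > 0" using that assms by auto
    have "ln x - ln y = ln (x / y)" using pos by (simp add: ln_div)
    also have "\<dots> \<le> x / y - 1" using pos by (intro ln_le_minus_one) simp
    also have "\<dots> = (x - y) / y" using pos by (simp add: field_simps)
    also have "\<dots> \<le> (x - y) / m" using that assms by (intro divide_left_mono) auto
    finally show ?thesis by simp
  qed
  show ?thesis
  proof (cases "v \<le> u")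
    case True
    then have "ln v \<le> ln u" using assms by simp
    then show ?thesis using key[OF assms(3) True] True by simp
  next
    case False
    then have "ln u \<le> ln v" using assms by simp
    then show ?thesis using key[OF assms(2)] False by simp
  qed
qed

lemma ac_ln:
  fixes q :: "real \<Rightarrow> real"
  assumes ac: "absolutely_continuous_on {c..d} q" and pos: "\<And>t. t \<in> {c..d} \<Longrightarrow> q t > 0"
  shows "absolutely_continuous_on {c..d} (\<lambda>t. ln (q t))"
proof -
  obtain m where m: "m > 0" "\<And>t. t \<in> {c..d} \<Longrightarrow> m \<le> q t" using ac_pos_min[OF ac pos] by blast
  show ?thesis
  proof (rule ac_comp_lipschitz[OF ac, of "{m..}" _ "1/m"])
    show "\<And>x. x \<in> {c..d} \<Longrightarrow> q x \<in> {m..}" using m by auto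
    fix u v :: real assume u: "u \<in> {m..}" and v: "v \<in> {m..}"
    then show "norm (ln u - ln v) \<le> 1/m * norm (u - v)"
      using ln_lipschitz[OF m(1)] by auto
  qed
qed

lemma ac_Re:
  assumes "absolutely_continuous_on S (f :: real \<Rightarrow> complex)"
  shows "absolutely_continuous_on S (\<lambda>t. Re (f t))"
  by (rule ac_comp_lipschitz[OF assms, of UNIV _ 1]) (auto simp: abs_Re_le_cmod simp flip: minus_complex.sel)

lemma ac_Im:
  assumes "absolutely_continuous_on S (f :: real \<Rightarrow> complex)"
  shows "absolutely_continuous_on S (\<lambda>t. Im (f t))"
  by (rule ac_comp_lipschitz[OF assms, of UNIV _ 1]) (auto simp: abs_Im_le_cmod simp flip: minus_complex.sel)

lemma ac_norm:
  assumes "absolutely_continuous_on S (f :: real \<Rightarrow> complex)"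
  shows "absolutely_continuous_on S (\<lambda>t. norm (f t))"
  by (rule ac_comp_lipschitz[OF assms, of UNIV _ 1]) (auto simp: norm_triangle_ineq3)

lemma Re_deriv:
  assumes "(f has_vector_derivative D) (at x)"
  shows "((\<lambda>t. Re (f t)) has_real_derivative Re D) (at x)"
proof -
  have "((\<lambda>t. Re (f t)) has_derivative (\<lambda>h. Re (h *\<^sub>R D))) (at x)"
    using bounded_linear.has_derivative[OF bounded_linear_Re assms[unfolded has_vector_derivative_def]] .
  moreover have "(\<lambda>h. Re (h *\<^sub>R D)) = (*) (Re D)" by (auto simp: fun_eq_iff)
  ultimately show ?thesis by (simp add: has_field_derivative_def)
qed

lemma Im_deriv:
  assumes "(f has_vector_derivative D) (at x)"
  shows "((\<lambda>t. Im (f t)) has_real_derivative Im D) (at x)"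
proof -
  have "((\<lambda>t. Im (f t)) has_derivative (\<lambda>h. Im (h *\<^sub>R D))) (at x)"
    using bounded_linear.has_derivative[OF bounded_linear_Im assms[unfolded has_vector_derivative_def]] .
  moreover have "(\<lambda>h. Im (h *\<^sub>R D)) = (*) (Im D)" by (auto simp: fun_eq_iff)
  ultimately show ?thesis by (simp add: has_field_derivative_def)
qed

lemma ereal_lt_trans1: "z \<le> y \<Longrightarrow> ereal y < b \<Longrightarrow> ereal z < (b::ereal)"
  by (rule le_less_trans[of _ "ereal y"]) auto
lemma ereal_lt_trans2: "(a::ereal) < ereal x \<Longrightarrow> x \<le> z \<Longrightarrow> a < ereal z"
  by (rule less_le_trans[of _ "ereal x"]) auto

lemma ointerval_between:
  assumes "x \<in> ointerval a b" "y \<in> ointerval a b" "x \<le> z" "z \<le> y"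
  shows "z \<in> ointerval a b"
proof -
  have "a < ereal x" "ereal y < b" using assms(1,2) by (auto simp: ointerval_def)
  moreover have "ereal x \<le> ereal z" "ereal z \<le> ereal y" using assms(3,4) by auto
  ultimately have "a < ereal z" "ereal z < b" using assms(3,4) by (auto intro: ereal_lt_trans1 ereal_lt_trans2)
  then show ?thesis by (simp add: ointerval_def)
qed

lemma ointerval_Icc:
  assumes "x \<in> ointerval a b" "y \<in> ointerval a b"
  shows "{x..y} \<subseteq> ointerval a b"
  using ointerval_between[OF assms] by auto

lemma ointerval_above:
  assumes "x \<in> ointerval a b"
  shows "\<exists>t\<in>ointerval a b. x < t"
proof -
  have "ereal x < b" using assms by (simp add: ointerval_def)
  then obtain t where t: "ereal x < ereal t" "ereal t < b" using ereal_dense2 by blast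
  then have "t \<in> ointerval a b" using assms ointerval_between[OF assms, of t]
    by (auto simp: ointerval_def intro: less_trans)
  then show ?thesis using t by auto
qed

lemma mono_deriv_nonneg:
  fixes q :: "real \<Rightarrow> real"
  assumes mono: "mono_on (ointerval a b) q" and x: "x \<in> ointerval a b"
    and D: "(q has_real_derivative D) (at x)"
  shows "D \<ge> 0"
proof (rule ccontr)
  assume "\<not> D \<ge> 0"
  then have "D < 0" by simp
  from DERIV_neg_dec_right[OF D this] obtain d where d: "d > 0" "\<And>h. h > 0 \<Longrightarrow> h < d \<Longrightarrow> q x > q (x + h)"
    by blast
  obtain t where t: "t \<in> ointerval a b" "x < t" using ointerval_above[OF x] by blast
  define h where "h = min (d/2) (t - x)"
  have h: "h > 0" "h < d" "h \<le> t - x" using d t by (auto simp: h_def)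
  have "x + h \<in> ointerval a b" using ointerval_between[OF x t(1)] h by auto
  then have "q x \<le> q (x + h)" using mono x h by (auto simp: mono_on_def)
  then show False using d(2)[OF h(1,2)] by simp
qed

lemma at_left_end_nontrivial:
  assumes "a < b"
  shows "at_left_end a \<noteq> bot"
proof (cases "a = -\<infinity>")
  case True
  then show ?thesis by (simp add: at_left_end_def)
next
  case False
  then show ?thesis by (simp add: at_left_end_def)
qed

lemma at_left_end_eventually:
  assumes ev: "eventually P (at_left_end a)" and x: "x \<in> ointerval a b"
  shows "\<exists>y0. y0 \<in> ointerval a b \<and> y0 < x \<and> (\<forall>y. a < ereal y \<and> y \<le> y0 \<longrightarrow> P y)"
proof (cases "a = -\<infinity>")
  case True
  then have "eventually P at_bot" using ev by (simp add: at_left_end_def)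
  then obtain N where N: "\<forall>n\<le>N. P n" unfolding eventually_at_bot_linorder by blast
  define y0 where "y0 = min N (x - 1)"
  have "y0 \<in> ointerval a b"
  proof -
    have "y0 < x" by (simp add: y0_def)
    then have "ereal y0 < ereal x" by simp
    also have "\<dots> < b" using x by (simp add: ointerval_def)
    finally show ?thesis using True by (simp add: ointerval_def)
  qed
  moreover have "y0 < x" by (simp add: y0_def)
  moreover have "\<forall>y. a < ereal y \<and> y \<le> y0 \<longrightarrow> P y" using N by (auto simp: y0_def)
  ultimately show ?thesis by blast
next
  case False
  have "a < ereal x" using x by (simp add: ointerval_def)
  then have "a \<noteq> \<infinity>" by auto
  with False obtain a0 where a0: "a = ereal a0" by (cases a) auto
  then have "eventually P (at_right a0)" using ev by (simp add: at_left_end_def)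
  then obtain b1 where b1: "b1 > a0" "\<forall>y>a0. y < b1 \<longrightarrow> P y"
    unfolding eventually_at_right_field by blast
  have xa: "a0 < x" using x a0 by (simp add: ointerval_def)
  define y0 where "y0 = (a0 + min b1 x) / 2"
  have y0: "a0 < y0" "y0 < b1" "y0 < x" unfolding y0_def by (cases "b1 \<le> x") (use b1(1) xa in \<open>simp_all add: min_def\<close>)
  have "ereal y0 < b" using ereal_lt_trans1[of y0 x b] y0(3) x by (simp add: ointerval_def)
  then have I0: "y0 \<in> ointerval a b" unfolding ointerval_def using a0 y0(1) by simp
  have P0: "\<forall>y. a < ereal y \<and> y \<le> y0 \<longrightarrow> P y"
  proof (intro allI impI)
    fix y assume "a < ereal y \<and> y \<le> y0"
    then have "a0 < y" "y < b1" using a0 y0 by auto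
    then show "P y" using b1(2) by blast
  qed
  show ?thesis by (intro exI[of _ y0]) (use I0 y0(3) P0 in blast)
qed

lemma at_left_end_in:
  assumes x: "x \<in> ointerval a b"
  shows "eventually (\<lambda>y. y \<in> ointerval a b \<and> y < x) (at_left_end a)"
proof -
  have xb: "ereal x < b" and ax: "a < ereal x" using x by (auto simp: ointerval_def)
  have below: "y \<in> ointerval a b" if "a < ereal y" "y < x" for y
  proof -
    have "ereal y < b" using ereal_lt_trans1[of y x b] that xb by simp
    then show ?thesis using that by (simp add: ointerval_def)
  qed
  show ?thesis
  proof (cases "a = -\<infinity>")
    case True
    have "eventually (\<lambda>y. y < x) at_bot" by (rule eventually_at_bot_linorderI[of "x - 1"]) simp
    then have "eventually (\<lambda>y. y \<in> ointerval a b \<and> y < x) at_bot"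
      by (rule eventually_mono) (use below True in auto)
    then show ?thesis using True by (simp add: at_left_end_def)
  next
    case False
    have "a \<noteq> \<infinity>" using ax by auto
    with False obtain a0 where a0: "a = ereal a0" by (cases a) auto
    have xa: "a0 < x" using ax a0 by simp
    have "eventually (\<lambda>y. a0 < y \<and> y < x) (at_right a0)"
      unfolding eventually_at_right_field using xa by blast
    then have "eventually (\<lambda>y. y \<in> ointerval a b \<and> y < x) (at_right a0)"
      by (rule eventually_mono) (use below a0 in auto)
    then show ?thesis using a0 by (simp add: at_left_end_def)
  qed
qed

lemma ac_integral:
  fixes g :: "real \<Rightarrow> real"
  assumes cont: "continuous_on {c..d} g"
  shows "absolutely_continuous_on {c..d} (\<lambda>s. integral {c..s} g)"
proof -
  have "compact (g ` {c..d})" by (rule compact_continuous_image[OF cont]) simp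
  then have "bounded (g ` {c..d})" by (rule compact_imp_bounded)
  then obtain B where B: "\<And>x. x \<in> {c..d} \<Longrightarrow> norm (g x) \<le> B"
    unfolding bounded_iff by blast
  show ?thesis
  proof (rule lipschitz_imp_ac[of _ _ B])
    fix x y assume x: "x \<in> {c..d}" and y: "y \<in> {c..d}" and xy: "x \<le> y"
    have suby: "{c..y} \<subseteq> {c..d}" using y by auto
    have int: "g integrable_on {c..y}"
      by (rule integrable_continuous_real) (rule continuous_on_subset[OF cont suby])
    have cx: "c \<le> x" using x by simp
    have "integral {c..x} g + integral {x..y} g = integral {c..y} g"
      by (rule Henstock_Kurzweil_Integration.integral_combine[OF cx xy int])
    then have "integral {c..y} g - integral {c..x} g = integral {x..y} g" by simp
    moreover have sub: "{x..y} \<subseteq> {c..d}" using x y by auto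
    have "norm (integral {x..y} g) \<le> B * (y - x)"
    proof (rule integral_bound[OF xy])
      show "continuous_on {x..y} g" by (rule continuous_on_subset[OF cont sub])
      fix t assume "t \<in> {x..y}"
      then show "norm (g t) \<le> B" using sub by (intro B) auto
    qed
    ultimately show "norm (integral {c..y} g - integral {c..x} g) \<le> B * (y - x)" by simp
  qed
qed

lemma integral_deriv:
  fixes g :: "real \<Rightarrow> real"
  assumes cont: "continuous_on {c..d} g" and s: "s \<in> {c<..<d}"
  shows "((\<lambda>s. integral {c..s} g) has_real_derivative g s) (at s)"
proof -
  have "((\<lambda>s. integral {c..s} g) has_real_derivative g s) (at s within {c..d})"
    using integral_has_real_derivative[OF cont] s by auto
  moreover have "at s within {c..d} = at s"
    by (rule at_within_interior) (use s in simp)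
  ultimately show ?thesis by simp
qed

lemma sq_deriv:
  fixes f :: "real \<Rightarrow> complex"
  assumes R: "((\<lambda>t. Re (f t)) has_real_derivative A) (at s)" and I: "((\<lambda>t. Im (f t)) has_real_derivative B) (at s)"
  shows "((\<lambda>t. (Re (f t))\<^sup>2 + (Im (f t))\<^sup>2) has_real_derivative (2 * Re (f s) * A + 2 * Im (f s) * B)) (at s)"
  by (rule DERIV_cong[OF DERIV_add[OF DERIV_power[OF R, of 2] DERIV_power[OF I, of 2]]]) (simp add: algebra_simps)

lemma sq_pos: fixes z :: complex assumes "z \<noteq> 0" shows "0 < (Re z)\<^sup>2 + (Im z)\<^sup>2"
proof -
  have "0 < (cmod z)\<^sup>2" using assms by simp
  then show ?thesis by (simp add: cmod_power2)
qed

lemma norm_deriv: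
  fixes f :: "real \<Rightarrow> complex"
  assumes D: "(f has_vector_derivative D) (at s)" and nz: "f s \<noteq> 0"
  shows "\<exists>U. ((\<lambda>t. norm (f t)) has_real_derivative U) (at s) \<and> \<bar>U\<bar> \<le> norm D"
proof -
  have R: "((\<lambda>t. Re (f t)) has_real_derivative Re D) (at s)" by (rule Re_deriv[OF D])
  have I: "((\<lambda>t. Im (f t)) has_real_derivative Im D) (at s)" by (rule Im_deriv[OF D])
  have pos: "0 < (Re (f s))\<^sup>2 + (Im (f s))\<^sup>2" by (rule sq_pos[OF nz])
  have eq: "(\<lambda>t. norm (f t)) = (\<lambda>t. sqrt ((Re (f t))\<^sup>2 + (Im (f t))\<^sup>2))"
    by (simp add: cmod_def)
  define U where "U = inverse (sqrt ((Re (f s))\<^sup>2 + (Im (f s))\<^sup>2)) / 2 * (2 * Re (f s) * Re D + 2 * Im (f s) * Im D)"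
  have "((\<lambda>t. sqrt ((Re (f t))\<^sup>2 + (Im (f t))\<^sup>2)) has_real_derivative U) (at s)"
    unfolding U_def by (rule DERIV_chain2[OF DERIV_real_sqrt[OF pos] sq_deriv[OF R I]])
  moreover have "\<bar>U\<bar> \<le> norm D"
  proof -
    have "sqrt ((Re (f s))\<^sup>2 + (Im (f s))\<^sup>2) = norm (f s)" by (simp add: cmod_def)
    then have U: "U = Re (cnj (f s) * D) / norm (f s)"
      by (simp add: U_def divide_simps)
    have "\<bar>Re (cnj (f s) * D)\<bar> \<le> norm (f s) * norm D"
      using abs_Re_le_cmod[of "cnj (f s) * D"] by (simp add: norm_mult)
    then show ?thesis using nz by (simp add: U abs_div divide_le_eq mult.commute)
  qed
  ultimately show ?thesis unfolding eq by blast
qed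

definition Efun :: "real \<Rightarrow> (real \<Rightarrow> real) \<Rightarrow> (real \<Rightarrow> real) \<Rightarrow> (real \<Rightarrow> complex) \<Rightarrow> (real \<Rightarrow> complex) \<Rightarrow> real \<Rightarrow> real" where
  "Efun lam p r w w1 t = Re (w t) * Re (w t) + Im (w t) * Im (w t) +
     (1/lam) * ((Re (w1 t) * Re (w1 t) + Im (w1 t) * Im (w1 t)) * (1 / (p t * r t)))"

lemma E_deriv:
  fixes w w1 :: "real \<Rightarrow> complex" and p r :: "real \<Rightarrow> real"
  assumes lam: "lam > 0" and ps: "p s > 0" and rs: "r s > 0"
    and P: "(p has_real_derivative P1) (at s)" and R: "(r has_real_derivative R1) (at s)"
    and dw: "(w has_vector_derivative (w1 s / complex_of_real (p s))) (at s)"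
    and dw1: "(w1 has_vector_derivative (- (complex_of_real lam * complex_of_real (r s) * w s))) (at s)"
  shows "(Efun lam p r w w1 has_real_derivative
     (- (1/lam) * ((Re (w1 s) * Re (w1 s) + Im (w1 s) * Im (w1 s)) * ((P1 * r s + p s * R1) / (p s * r s * (p s * r s)))))) (at s)"
proof -
  have Rw: "((\<lambda>t. Re (w t)) has_real_derivative Re (w1 s) / p s) (at s)"
    using Re_deriv[OF dw] by simp
  have Iw: "((\<lambda>t. Im (w t)) has_real_derivative Im (w1 s) / p s) (at s)"
    using Im_deriv[OF dw] by simp
  have Rw1: "((\<lambda>t. Re (w1 t)) has_real_derivative - (lam * r s * Re (w s))) (at s)"
    using Re_deriv[OF dw1] by simp
  have Iw1: "((\<lambda>t. Im (w1 t)) has_real_derivative - (lam * r s * Im (w s))) (at s)"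
    using Im_deriv[OF dw1] by simp
  have q: "((\<lambda>t. p t * r t) has_real_derivative (P1 * r s + p s * R1)) (at s)"
    by (rule DERIV_cong[OF DERIV_mult[OF P R]]) simp
  have qnz: "p s * r s \<noteq> 0" using ps rs by simp
  have inv: "((\<lambda>t. 1 / (p t * r t)) has_real_derivative
      ((0 * (p s * r s) - 1 * (P1 * r s + p s * R1)) / (p s * r s * (p s * r s)))) (at s)"
    by (rule DERIV_divide[OF DERIV_const q qnz])
  define A1 where "A1 = Re (w1 s) / p s"
  define A2 where "A2 = Im (w1 s) / p s"
  define B1 where "B1 = - (lam * r s * Re (w s))"
  define B2 where "B2 = - (lam * r s * Im (w s))"
  define Q where "Q = (0 * (p s * r s) - 1 * (P1 * r s + p s * R1)) / (p s * r s * (p s * r s))"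
  have all: "(Efun lam p r w w1 has_real_derivative
     ((A1 * Re (w s) + A1 * Re (w s)) + (A2 * Im (w s) + A2 * Im (w s))
      + (1/lam) * (((B1 * Re (w1 s) + B1 * Re (w1 s)) + (B2 * Im (w1 s) + B2 * Im (w1 s))) * (1 / (p s * r s))
         + Q * (Re (w1 s) * Re (w1 s) + Im (w1 s) * Im (w1 s))))) (at s)"
    unfolding Efun_def A1_def A2_def B1_def B2_def Q_def
    by (intro DERIV_add DERIV_mult DERIV_cmult Rw Iw Rw1 Iw1 inv)
  show ?thesis
  proof (rule DERIV_cong[OF all])
    show "A1 * Re (w s) + A1 * Re (w s) + (A2 * Im (w s) + A2 * Im (w s)) +
      1 / lam * ((B1 * Re (w1 s) + B1 * Re (w1 s) + (B2 * Im (w1 s) + B2 * Im (w1 s))) * (1 / (p s * r s)) +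
            Q * (Re (w1 s) * Re (w1 s) + Im (w1 s) * Im (w1 s))) =
    - (1 / lam) * ((Re (w1 s) * Re (w1 s) + Im (w1 s) * Im (w1 s)) * ((P1 * r s + p s * R1) / (p s * r s * (p s * r s))))"
      unfolding A1_def A2_def B1_def B2_def Q_def
      using lam ps rs by (simp add: field_simps)
  qed
qed


lemma locally_acD:
  assumes "locally_ac_on (ointerval a b) f" "y \<in> ointerval a b" "x \<in> ointerval a b"
  shows "absolutely_continuous_on {y..x} f"
  using assms ointerval_Icc[OF assms(2,3)] unfolding locally_ac_on_def by blast

lemma Efun_ac:
  fixes w w1 :: "real \<Rightarrow> complex" and p r :: "real \<Rightarrow> real"
  assumes acw: "absolutely_continuous_on {y..x} w" and acw1: "absolutely_continuous_on {y..x} w1"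
    and acp: "absolutely_continuous_on {y..x} p" and acr: "absolutely_continuous_on {y..x} r"
    and pos: "\<And>t. t \<in> {y..x} \<Longrightarrow> p t * r t > 0"
  shows "absolutely_continuous_on {y..x} (Efun lam p r w w1)"
proof -
  have eq: "Efun lam p r w w1 = (\<lambda>t. (Re (w t) * Re (w t) + Im (w t) * Im (w t)) +
     (1/lam) * ((Re (w1 t) * Re (w1 t) + Im (w1 t) * Im (w1 t)) * (1 / (p t * r t))))"
    by (rule ext) (simp add: Efun_def)
  have a1: "absolutely_continuous_on {y..x} (\<lambda>t. Re (w t) * Re (w t) + Im (w t) * Im (w t))"
    by (intro ac_add ac_mult ac_Re ac_Im acw)
  have a2: "absolutely_continuous_on {y..x} (\<lambda>t. Re (w1 t) * Re (w1 t) + Im (w1 t) * Im (w1 t))"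
    by (intro ac_add ac_mult ac_Re ac_Im acw1)
  have a3: "absolutely_continuous_on {y..x} (\<lambda>t. 1 / (p t * r t))"
    by (rule ac_inverse[OF ac_mult[OF acp acr] pos])
  show ?thesis unfolding eq
    by (intro ac_add ac_scale ac_mult a1 a2 a3)
qed

lemma E_mono:
  fixes w w1 :: "real \<Rightarrow> complex" and p r p' r' :: "real \<Rightarrow> real"
  assumes lam: "lam > 0"
   and ppos: "\<forall>x\<in>ointerval a b. p x > 0" and rpos: "\<forall>x\<in>ointerval a b. r x > 0"
   and pac: "locally_ac_on (ointerval a b) p" and rac: "locally_ac_on (ointerval a b) r"
   and pd: "\<forall>x\<in>ointerval a b. (p has_real_derivative p' x) (at x)"
   and rd: "\<forall>x\<in>ointerval a b. (r has_real_derivative r' x) (at x)"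
   and incr: "mono_on (ointerval a b) (\<lambda>x. p x * r x)"
   and wac: "locally_ac_on (ointerval a b) w" and w1ac: "locally_ac_on (ointerval a b) w1"
   and N: "negligible N"
   and der: "\<And>x. x \<in> ointerval a b \<Longrightarrow> x \<notin> N \<Longrightarrow>
       (w has_vector_derivative (w1 x / complex_of_real (p x))) (at x) \<and>
       (w1 has_vector_derivative (- (complex_of_real lam * complex_of_real (r x) * w x))) (at x)"
   and y: "y \<in> ointerval a b" and x: "x \<in> ointerval a b" and yx: "y \<le> x"
  shows "Efun lam p r w w1 x \<le> Efun lam p r w w1 y"
proof (rule ac_nonpos_deriv[OF yx _ N])
  have sub: "{y..x} \<subseteq> ointerval a b" by (rule ointerval_Icc[OF y x])
  have pos: "p t * r t > 0" if "t \<in> {y..x}" for t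
  proof -
    have "t \<in> ointerval a b" using sub that by blast
    then have "p t > 0" "r t > 0" using ppos rpos by auto
    then show ?thesis by simp
  qed
  show "absolutely_continuous_on {y..x} (Efun lam p r w w1)"
    by (rule Efun_ac[OF locally_acD[OF wac y x] locally_acD[OF w1ac y x] locally_acD[OF pac y x]
          locally_acD[OF rac y x] pos])
  fix s assume s: "s \<in> {y<..<x}" "s \<notin> N"
  then have sI: "s \<in> ointerval a b" using sub by auto
  have ps: "p s > 0" and rs: "r s > 0" using ppos rpos sI by auto
  have P: "(p has_real_derivative p' s) (at s)" and R: "(r has_real_derivative r' s) (at s)"
    using pd rd sI by auto
  have dd: "(w has_vector_derivative (w1 s / complex_of_real (p s))) (at s)"
      "(w1 has_vector_derivative (- (complex_of_real lam * complex_of_real (r s) * w s))) (at s)"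
    using der[OF sI s(2)] by auto
  have Ed: "(Efun lam p r w w1 has_real_derivative
     (- (1/lam) * ((Re (w1 s) * Re (w1 s) + Im (w1 s) * Im (w1 s)) * ((p' s * r s + p s * r' s) / (p s * r s * (p s * r s)))))) (at s)"
    by (rule E_deriv[OF lam ps rs P R dd])
  have q: "((\<lambda>t. p t * r t) has_real_derivative (p' s * r s + p s * r' s)) (at s)"
    by (rule DERIV_cong[OF DERIV_mult[OF P R]]) simp
  have q0: "p' s * r s + p s * r' s \<ge> 0" by (rule mono_deriv_nonneg[OF incr sI q])
  have v0: "Re (w1 s) * Re (w1 s) + Im (w1 s) * Im (w1 s) \<ge> 0" by simp
  have "(p' s * r s + p s * r' s) / (p s * r s * (p s * r s)) \<ge> 0"
    using q0 ps rs by simp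
  then have "0 \<le> (1/lam) * ((Re (w1 s) * Re (w1 s) + Im (w1 s) * Im (w1 s)) * ((p' s * r s + p s * r' s) / (p s * r s * (p s * r s))))"
    using v0 lam by (intro mult_nonneg_nonneg) auto
  then show "\<exists>D. (Efun lam p r w w1 has_real_derivative D) (at s) \<and> D \<le> 0"
    using Ed by (intro exI[of _ "(- (1/lam) * ((Re (w1 s) * Re (w1 s) + Im (w1 s) * Im (w1 s)) * ((p' s * r s + p s * r' s) / (p s * r s * (p s * r s)))))"]) simp
qed

lemma u_deriv:
  fixes w w1 :: "real \<Rightarrow> complex"
  assumes lam: "lam > 0" and rs: "r s > 0" and wb: "cmod (w s) \<le> 2" and nz: "w1 s \<noteq> 0"
    and d: "(w1 has_vector_derivative (- (complex_of_real lam * complex_of_real (r s) * w s))) (at s)"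
  shows "\<exists>U. ((\<lambda>t. cmod (w1 t)) has_real_derivative U) (at s) \<and> \<bar>U\<bar> \<le> 2 * lam * r s"
proof -
  obtain U where U: "((\<lambda>t. cmod (w1 t)) has_real_derivative U) (at s)"
      "\<bar>U\<bar> \<le> cmod (- (complex_of_real lam * complex_of_real (r s) * w s))"
    using norm_deriv[OF d nz] by blast
  have "cmod (- (complex_of_real lam * complex_of_real (r s) * w s)) = lam * r s * cmod (w s)"
    using lam rs by (simp add: norm_mult)
  also have "\<dots> \<le> lam * r s * 2" using lam rs wb by (intro mult_left_mono) auto
  finally show ?thesis using U by (intro exI[of _ U]) auto
qed

lemma cont_of_ac:
  "locally_ac_on (ointerval a b) f \<Longrightarrow> y \<in> ointerval a b \<Longrightarrow> x \<in> ointerval a b \<Longrightarrow> continuous_on {y..x} f"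
  by (rule ac_continuous[OF locally_acD])

lemma G_bound:
  fixes w w1 :: "real \<Rightarrow> complex" and p r :: "real \<Rightarrow> real"
  assumes lam: "lam > 0" and eta: "\<eta> > 0"
   and tI: "t \<in> ointerval a b" and yI: "y0 \<in> ointerval a b" and ty: "t \<le> y0"
   and ppos: "\<forall>x\<in>ointerval a b. p x > 0" and rpos: "\<forall>x\<in>ointerval a b. r x > 0"
   and pac: "locally_ac_on (ointerval a b) p"
   and w1ac: "locally_ac_on (ointerval a b) w1"
   and N: "negligible N"
   and der: "\<And>x. x \<in> ointerval a b \<Longrightarrow> x \<notin> N \<Longrightarrow>
       (w1 has_vector_derivative (- (complex_of_real lam * complex_of_real (r x) * w x))) (at x)"
   and wb: "\<And>s. s \<in> {t..y0} \<Longrightarrow> cmod (w s) \<le> 2"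
   and upos: "\<And>s. s \<in> {t..y0} \<Longrightarrow> cmod (w1 s) > 0"
   and big: "\<And>s. s \<in> {t..y0} \<Longrightarrow> 2 * \<eta> * lam * (p s * r s) \<le> (cmod (w1 s))\<^sup>2"
  shows "\<eta> / cmod (w1 t) \<le> integral {t..y0} (\<lambda>x. 1 / p x) + \<eta> / cmod (w1 y0)"
proof -
  have sub: "{t..y0} \<subseteq> ointerval a b" by (rule ointerval_Icc[OF tI yI])
  have pcont: "continuous_on {t..y0} p" by (rule cont_of_ac[OF pac tI yI])
  have gcont: "continuous_on {t..y0} (\<lambda>x. 1 / p x)"
    by (intro continuous_intros pcont) (use sub ppos in fastforce)
  define G where "G = (\<lambda>s. (-1) * integral {t..s} (\<lambda>x. 1 / p x) + (- \<eta>) * (1 / cmod (w1 s)))"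
  have "G y0 \<le> G t"
  proof (rule ac_nonpos_deriv[OF ty _ N])
    show "absolutely_continuous_on {t..y0} G"
      unfolding G_def
      by (intro ac_add ac_scale ac_integral gcont ac_inverse ac_norm locally_acD[OF w1ac tI yI] upos)
    fix s assume s: "s \<in> {t<..<y0}" "s \<notin> N"
    then have sI: "s \<in> ointerval a b" and sIcc: "s \<in> {t..y0}" using sub by auto
    have ps: "p s > 0" and rs: "r s > 0" using ppos rpos sI by auto
    have us: "cmod (w1 s) > 0" using upos[OF sIcc] .
    then have nz: "w1 s \<noteq> 0" by auto
    have "\<exists>U. ((\<lambda>t. cmod (w1 t)) has_real_derivative U) (at s) \<and> \<bar>U\<bar> \<le> 2 * lam * r s"
      by (rule u_deriv[of lam r s w w1, OF lam rs wb[OF sIcc] nz der[OF sI s(2)]])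
    then obtain U where U: "((\<lambda>t. cmod (w1 t)) has_real_derivative U) (at s)" "\<bar>U\<bar> \<le> 2 * lam * r s"
      by blast
    have dI: "((\<lambda>s. integral {t..s} (\<lambda>x. 1 / p x)) has_real_derivative 1 / p s) (at s)"
      by (rule integral_deriv[OF gcont s(1)])
    have dinv: "((\<lambda>s. 1 / cmod (w1 s)) has_real_derivative (0 * cmod (w1 s) - 1 * U) / (cmod (w1 s) * cmod (w1 s))) (at s)"
      by (rule DERIV_divide[OF DERIV_const U(1)]) (use nz in simp)
    have dG: "(G has_real_derivative ((-1) * (1 / p s) + (- \<eta>) * ((0 * cmod (w1 s) - 1 * U) / (cmod (w1 s) * cmod (w1 s))))) (at s)"
      unfolding G_def by (intro DERIV_add DERIV_cmult dI dinv)
    have "(-1) * (1 / p s) + (- \<eta>) * ((0 * cmod (w1 s) - 1 * U) / (cmod (w1 s) * cmod (w1 s)))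
        = \<eta> * U / (cmod (w1 s))\<^sup>2 - 1 / p s" by (simp add: power2_eq_square)
    also have "\<dots> \<le> 0"
    proof -
      have "\<eta> * U \<le> \<eta> * (2 * lam * r s)" using U(2) eta by (intro mult_left_mono) auto
      also have "\<dots> = (2 * \<eta> * lam * (p s * r s)) / p s" using ps by (simp add: field_simps)
      also have "\<dots> \<le> (cmod (w1 s))\<^sup>2 / p s" using big[OF sIcc] ps by (intro divide_right_mono) auto
      finally have "\<eta> * U \<le> (cmod (w1 s))\<^sup>2 / p s" .
      then have "\<eta> * U / (cmod (w1 s))\<^sup>2 \<le> ((cmod (w1 s))\<^sup>2 / p s) / (cmod (w1 s))\<^sup>2"
        using us by (intro divide_right_mono) auto
      also have "\<dots> = 1 / p s" using us by (simp add: field_simps)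
      finally show ?thesis by simp
    qed
    finally have "(-1) * (1 / p s) + (- \<eta>) * ((0 * cmod (w1 s) - 1 * U) / (cmod (w1 s) * cmod (w1 s))) \<le> 0" .
    then show "\<exists>D. (G has_real_derivative D) (at s) \<and> D \<le> 0" using dG by blast
  qed
  then show ?thesis by (simp add: G_def)
qed

lemma Q_bound:
  fixes w w1 :: "real \<Rightarrow> complex" and p r :: "real \<Rightarrow> real"
  assumes lam: "lam > 0"
   and tI: "t \<in> ointerval a b" and yI: "y0 \<in> ointerval a b" and ty: "t \<le> y0"
   and rpos: "\<forall>x\<in>ointerval a b. r x > 0"
   and rac: "locally_ac_on (ointerval a b) r"
   and w1ac: "locally_ac_on (ointerval a b) w1"
   and N: "negligible N"
   and der: "\<And>x. x \<in> ointerval a b \<Longrightarrow> x \<notin> N \<Longrightarrow>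
       (w1 has_vector_derivative (- (complex_of_real lam * complex_of_real (r x) * w x))) (at x)"
   and wb: "\<And>s. s \<in> {t..y0} \<Longrightarrow> cmod (w s) \<le> 2"
   and upos: "\<And>s. s \<in> {t..y0} \<Longrightarrow> cmod (w1 s) > 0"
  shows "(ln (cmod (w1 y0)) - ln (cmod (w1 t))) / (2 * lam) \<le> integral {t..y0} (\<lambda>s. r s / cmod (w1 s))"
proof -
  have sub: "{t..y0} \<subseteq> ointerval a b" by (rule ointerval_Icc[OF tI yI])
  have rcont: "continuous_on {t..y0} r" by (rule cont_of_ac[OF rac tI yI])
  have ucont: "continuous_on {t..y0} (\<lambda>s. cmod (w1 s))"
    by (rule ac_continuous[OF ac_norm[OF locally_acD[OF w1ac tI yI]]])
  have hcont: "continuous_on {t..y0} (\<lambda>s. r s / cmod (w1 s))"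
    by (intro continuous_intros rcont ucont) (use upos in fastforce)
  define Q where "Q = (\<lambda>s. integral {t..s} (\<lambda>s. r s / cmod (w1 s)) + (- 1 / (2 * lam)) * ln (cmod (w1 s)))"
  have "Q t \<le> Q y0"
  proof (rule ac_nonneg_deriv[OF ty _ N])
    show "absolutely_continuous_on {t..y0} Q"
      unfolding Q_def
      by (intro ac_add ac_scale ac_integral hcont ac_ln ac_norm locally_acD[OF w1ac tI yI] upos)
    fix s assume s: "s \<in> {t<..<y0}" "s \<notin> N"
    then have sI: "s \<in> ointerval a b" and sIcc: "s \<in> {t..y0}" using sub by auto
    have rs: "r s > 0" using rpos sI by auto
    have us: "cmod (w1 s) > 0" using upos[OF sIcc] .
    then have nz: "w1 s \<noteq> 0" by auto
    have "\<exists>U. ((\<lambda>t. cmod (w1 t)) has_real_derivative U) (at s) \<and> \<bar>U\<bar> \<le> 2 * lam * r s"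
      by (rule u_deriv[of lam r s w w1, OF lam rs wb[OF sIcc] nz der[OF sI s(2)]])
    then obtain U where U: "((\<lambda>t. cmod (w1 t)) has_real_derivative U) (at s)" "\<bar>U\<bar> \<le> 2 * lam * r s"
      by blast
    have dI: "((\<lambda>s. integral {t..s} (\<lambda>s. r s / cmod (w1 s))) has_real_derivative r s / cmod (w1 s)) (at s)"
      by (rule integral_deriv[OF hcont s(1)])
    have dln: "((\<lambda>s. ln (cmod (w1 s))) has_real_derivative 1 / cmod (w1 s) * U) (at s)"
      by (rule DERIV_chain2[OF DERIV_ln_divide[OF us] U(1)])
    have dQ: "(Q has_real_derivative (r s / cmod (w1 s) + (- 1 / (2 * lam)) * (1 / cmod (w1 s) * U))) (at s)"
      unfolding Q_def by (intro DERIV_add DERIV_cmult dI dln)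
    have "0 \<le> r s / cmod (w1 s) + (- 1 / (2 * lam)) * (1 / cmod (w1 s) * U)"
    proof -
      have "U / (2 * lam) \<le> r s" using U(2) lam by (simp add: field_simps)
      then have "U / (2 * lam) / cmod (w1 s) \<le> r s / cmod (w1 s)" using us by (intro divide_right_mono) auto
      then show ?thesis by (simp add: field_simps)
    qed
    then show "\<exists>D. (Q has_real_derivative D) (at s) \<and> D \<ge> 0" using dQ by blast
  qed
  then show ?thesis using lam by (simp add: Q_def field_simps)
qed

lemma nn_cont_integral:
  fixes f :: "real \<Rightarrow> real"
  assumes cont: "continuous_on {u..v} f" and nn: "\<And>x. x \<in> {u..v} \<Longrightarrow> 0 \<le> f x"
  shows "(\<integral>\<^sup>+ x. ennreal (f x) * indicator {u..v} x \<partial>lborel) = ennreal (integral {u..v} f)"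
proof (rule nn_integral_has_integral_lebesgue')
  show "\<And>x. x \<in> {u..v} \<Longrightarrow> 0 \<le> f x" by (rule nn)
  show "(f has_integral integral {u..v} f) {u..v}"
    using integrable_continuous_real[OF cont] by (rule integrable_integral)
qed

lemma outer_bound:
  fixes p r h :: "real \<Rightarrow> real"
  assumes T: "(\<integral>\<^sup>+ y\<in>{y. a < ereal y \<and> y < c}.
          (\<integral>\<^sup>+ x\<in>{y..c}. ennreal (1 / p x) \<partial>lborel) * ennreal (r y) \<partial>lborel) \<le> ennreal M"
    and M: "M \<ge> 0" and ty: "t \<le> y0" and yc: "y0 < c" and at: "a < ereal t"
    and pcont: "continuous_on {t..c} (\<lambda>x. 1 / p x)" and ppos: "\<And>x. x \<in> {t..c} \<Longrightarrow> p x > 0"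
    and rpos: "\<And>x. x \<in> {t..c} \<Longrightarrow> r x > 0"
    and hcont: "continuous_on {t..y0} h" and hnn: "\<And>y. y \<in> {t..y0} \<Longrightarrow> 0 \<le> h y"
    and hle: "\<And>y. y \<in> {t..y0} \<Longrightarrow> h y \<le> integral {y..c} (\<lambda>x. 1 / p x) * r y"
  shows "integral {t..y0} h \<le> M"
proof -
  have inner: "(\<integral>\<^sup>+ x\<in>{y..c}. ennreal (1 / p x) \<partial>lborel) = ennreal (integral {y..c} (\<lambda>x. 1 / p x))"
    if y: "y \<in> {t..y0}" for y
  proof (rule nn_cont_integral)
    show "continuous_on {y..c} (\<lambda>x. 1 / p x)" by (rule continuous_on_subset[OF pcont]) (use y in auto)
    fix x assume "x \<in> {y..c}"
    then have "p x > 0" using y by (intro ppos) auto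
    then show "0 \<le> 1 / p x" by simp
  qed
  have "ennreal (integral {t..y0} h) = (\<integral>\<^sup>+ y. ennreal (h y) * indicator {t..y0} y \<partial>lborel)"
    by (rule nn_cont_integral[symmetric, OF hcont hnn])
  also have "\<dots> \<le> (\<integral>\<^sup>+ y. (\<integral>\<^sup>+ x\<in>{y..c}. ennreal (1 / p x) \<partial>lborel) * ennreal (r y) * indicator {y. a < ereal y \<and> y < c} y \<partial>lborel)"
  proof (rule nn_integral_mono)
    fix y :: real
    show "ennreal (h y) * indicator {t..y0} y \<le> (\<integral>\<^sup>+ x\<in>{y..c}. ennreal (1 / p x) \<partial>lborel) * ennreal (r y) * indicator {y. a < ereal y \<and> y < c} y"
    proof (cases "y \<in> {t..y0}")
      case True
      have ay: "a < ereal y" using at True by (auto intro: ereal_lt_trans2)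
      have yc': "y < c" using True yc by auto
      have ry: "r y > 0" using True yc by (intro rpos) auto
      have int_nn: "0 \<le> integral {y..c} (\<lambda>x. 1 / p x)"
      proof (rule integral_nonneg)
        show "(\<lambda>x. 1 / p x) integrable_on {y..c}"
          by (rule integrable_continuous_real, rule continuous_on_subset[OF pcont]) (use True in auto)
        fix x assume "x \<in> {y..c}"
        then have "p x > 0" using True by (intro ppos) auto
        then show "0 \<le> 1 / p x" by simp
      qed
      have "ennreal (h y) \<le> ennreal (integral {y..c} (\<lambda>x. 1 / p x) * r y)"
        using hle[OF True] by (rule ennreal_leI)
      also have "\<dots> = ennreal (integral {y..c} (\<lambda>x. 1 / p x)) * ennreal (r y)"
        using int_nn ry by (simp add: ennreal_mult)
      finally show ?thesis using True ay yc' inner[OF True] by simp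
    next
      case False
      then show ?thesis by simp
    qed
  qed
  also have "\<dots> \<le> ennreal M" using T by simp
  finally have "ennreal (integral {t..y0} h) \<le> ennreal M" .
  then show ?thesis using M by (simp add: ennreal_le_iff)
qed

lemma below_in:
  assumes "y0 \<in> ointerval a b" "a < ereal y" "y \<le> y0"
  shows "y \<in> ointerval a b"
proof -
  have "ereal y < b" using ereal_lt_trans1[of y y0 b] assms by (simp add: ointerval_def)
  then show ?thesis using assms(2) by (simp add: ointerval_def)
qed

lemma cmod_sq: "(cmod z)\<^sup>2 = Re z * Re z + Im z * Im z"
  using cmod_power2[of z] by (simp add: power2_eq_square)

lemma main_pos:
  fixes a b :: ereal and p r p' r' :: "real \<Rightarrow> real" and c lam :: real and w w1 :: "real \<Rightarrow> complex"
  assumes ab: "a < b" and lam: "lam > 0"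
    and ppos: "\<forall>x\<in>ointerval a b. p x > 0"
    and rpos: "\<forall>x\<in>ointerval a b. r x > 0"
    and pac: "locally_ac_on (ointerval a b) p"
    and rac: "locally_ac_on (ointerval a b) r"
    and pd: "\<forall>x\<in>ointerval a b. (p has_real_derivative p' x) (at x)"
    and rd: "\<forall>x\<in>ointerval a b. (r has_real_derivative r' x) (at x)"
    and cI: "c \<in> ointerval a b"
    and Tfin: "(\<integral>\<^sup>+ y\<in>{y. a < ereal y \<and> y < c}.
          (\<integral>\<^sup>+ x\<in>{y..c}. ennreal (1 / p x) \<partial>lborel) * ennreal (r y) \<partial>lborel) < \<infinity>"
    and incr: "mono_on (ointerval a b) (\<lambda>x. p x * r x)"
    and wac: "locally_ac_on (ointerval a b) w" and w1ac: "locally_ac_on (ointerval a b) w1"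
    and N: "negligible N"
    and der: "\<And>x. x \<in> ointerval a b \<Longrightarrow> x \<notin> N \<Longrightarrow>
       (w has_vector_derivative (w1 x / complex_of_real (p x))) (at x) \<and>
       (w1 has_vector_derivative (- (complex_of_real lam * complex_of_real (r x) * w x))) (at x)"
    and wlim: "(w \<longlongrightarrow> 1) (at_left_end a)" and w1lim: "(w1 \<longlongrightarrow> 0) (at_left_end a)"
    and x0: "x0 \<in> ointerval a b"
  shows "norm (w x0) \<le> 1"
proof (rule ccontr)
  assume "\<not> norm (w x0) \<le> 1"
  then have wx0: "norm (w x0) > 1" by simp
  let ?I = "ointerval a b"
  let ?E = "Efun lam p r w w1"
  let ?u = "\<lambda>t. cmod (w1 t)"
  define \<eta>0 where "\<eta>0 = ((cmod (w x0))\<^sup>2 - 1) / 3"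
  have eta0: "\<eta>0 > 0"
  proof -
    have "1 < (cmod (w x0))\<^sup>2" using wx0 by (simp add: one_less_power)
    then show ?thesis by (simp add: \<eta>0_def)
  qed
  have der1: "\<And>x. x \<in> ?I \<Longrightarrow> x \<notin> N \<Longrightarrow>
       (w1 has_vector_derivative (- (complex_of_real lam * complex_of_real (r x) * w x))) (at x)"
    using der by blast
  have Esq: "(cmod (w t))\<^sup>2 \<le> ?E t" if "t \<in> ?I" for t
  proof -
    have "p t > 0" "r t > 0" using that ppos rpos by auto
    then have "0 \<le> (1/lam) * ((Re (w1 t) * Re (w1 t) + Im (w1 t) * Im (w1 t)) * (1 / (p t * r t)))"
      using lam by (intro mult_nonneg_nonneg) auto
    then show ?thesis by (simp add: Efun_def cmod_sq)
  qed
  have "1 + 3 * \<eta>0 = (cmod (w x0))\<^sup>2" by (simp add: \<eta>0_def field_simps)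
  then have Ex0: "1 + 3 * \<eta>0 \<le> ?E x0" using Esq[OF x0] by simp
  have nlim: "((\<lambda>t. cmod (w t)) \<longlongrightarrow> 1) (at_left_end a)"
    using tendsto_norm[OF wlim] by simp
  have sqlim: "((\<lambda>t. (cmod (w t))\<^sup>2) \<longlongrightarrow> 1) (at_left_end a)"
    using tendsto_power[OF nlim, of 2] by simp
  have ev1: "eventually (\<lambda>t. (cmod (w t))\<^sup>2 < 1 + \<eta>0) (at_left_end a)"
    by (rule order_tendstoD(2)[OF sqlim]) (use eta0 in simp)
  have ev2: "eventually (\<lambda>t. cmod (w t) < 2) (at_left_end a)"
    by (rule order_tendstoD(2)[OF nlim]) simp
  have mI: "min x0 c \<in> ?I" using x0 cI by (simp add: min_def)
  obtain y0 where y0I: "y0 \<in> ?I" and y0m: "y0 < min x0 c"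
    and y0P: "\<forall>y. a < ereal y \<and> y \<le> y0 \<longrightarrow> (cmod (w y))\<^sup>2 < 1 + \<eta>0 \<and> cmod (w y) < 2"
    using at_left_end_eventually[OF eventually_conj[OF ev1 ev2] mI] by blast
  have y0x0: "y0 \<le> x0" and y0c: "y0 < c" using y0m by auto
  have key: "y \<in> ?I \<and> cmod (w y) < 2 \<and> ?u y > 0 \<and> 2 * \<eta>0 * lam * (p y * r y) \<le> (?u y)\<^sup>2"
    if ay: "a < ereal y" and yy0: "y \<le> y0" for y
  proof -
    have yI: "y \<in> ?I" by (rule below_in[OF y0I ay yy0])
    have P: "(cmod (w y))\<^sup>2 < 1 + \<eta>0" "cmod (w y) < 2" using y0P ay yy0 by auto
    have yx0: "y \<le> x0" using yy0 y0x0 by linarith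
    have "?E x0 \<le> ?E y"
      by (rule E_mono[OF lam ppos rpos pac rac pd rd incr wac w1ac N der yI x0 yx0])
    then have Ey: "1 + 3 * \<eta>0 \<le> ?E y" using Ex0 by simp
    have py: "p y > 0" and ry: "r y > 0" using yI ppos rpos by auto
    have "?E y = (cmod (w y))\<^sup>2 + (1/lam) * ((cmod (w1 y))\<^sup>2 * (1 / (p y * r y)))"
      by (simp add: Efun_def cmod_sq)
    then have "2 * \<eta>0 < (1/lam) * ((cmod (w1 y))\<^sup>2 * (1 / (p y * r y)))" using Ey P(1) by simp
    then have "2 * \<eta>0 < (cmod (w1 y))\<^sup>2 / (lam * (p y * r y))" by simp
    then have big: "2 * \<eta>0 * (lam * (p y * r y)) < (cmod (w1 y))\<^sup>2"
      using lam py ry by (simp add: pos_less_divide_eq)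
    have "0 < 2 * \<eta>0 * (lam * (p y * r y))" using eta0 lam py ry by simp
    then have "0 < (cmod (w1 y))\<^sup>2" using big by linarith
    then have "?u y > 0" by simp
    then show ?thesis using yI P(2) big by (simp add: mult.assoc)
  qed
  have pcontc: "continuous_on {y0..c} (\<lambda>x. 1 / p x)"
  proof -
    have "continuous_on {y0..c} p" by (rule cont_of_ac[OF pac y0I cI])
    moreover have "\<forall>x\<in>{y0..c}. p x \<noteq> 0" using ointerval_Icc[OF y0I cI] ppos by fastforce
    ultimately show ?thesis by (intro continuous_intros) auto
  qed
  define \<Phi>0 where "\<Phi>0 = integral {y0..c} (\<lambda>x. 1 / p x)"
  have Phi0: "\<Phi>0 > 0"
  proof -
    have acinv: "absolutely_continuous_on {y0..c} (\<lambda>x. 1 / p x)"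
      by (rule ac_inverse[OF locally_acD[OF pac y0I cI]]) (use ointerval_Icc[OF y0I cI] ppos in fastforce)
    have pos: "\<And>t. t \<in> {y0..c} \<Longrightarrow> 1 / p t > 0" using ointerval_Icc[OF y0I cI] ppos by fastforce
    obtain m where m: "m > 0" "\<And>t. t \<in> {y0..c} \<Longrightarrow> m \<le> 1 / p t"
      using ac_pos_min[OF acinv pos] by blast
    have "integral {y0..c} (\<lambda>x. m) \<le> \<Phi>0"
      unfolding \<Phi>0_def
      by (rule integral_le) (use m pcontc in \<open>auto intro: integrable_continuous_real\<close>)
    moreover have "integral {y0..c} (\<lambda>x. m) = (c - y0) * m" using y0c by simp
    moreover have "(c - y0) * m > 0" using y0c m by simp
    ultimately show ?thesis by linarith
  qed
  have uy0: "?u y0 > 0" using key[of y0] y0I by (auto simp: ointerval_def)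
  define \<eta> where "\<eta> = min \<eta>0 (\<Phi>0 * ?u y0)"
  have eta: "\<eta> > 0" using eta0 Phi0 uy0 by (simp add: \<eta>_def)
  have etale: "\<eta> \<le> \<eta>0" "\<eta> \<le> \<Phi>0 * ?u y0" by (auto simp: \<eta>_def)
  define T where "T = (\<integral>\<^sup>+ y\<in>{y. a < ereal y \<and> y < c}.
          (\<integral>\<^sup>+ x\<in>{y..c}. ennreal (1 / p x) \<partial>lborel) * ennreal (r y) \<partial>lborel)"
  define M where "M = enn2real T"
  have TM: "T \<le> ennreal M" using Tfin by (simp add: M_def T_def ennreal_enn2real)
  have M0: "M \<ge> 0" by (simp add: M_def)
  have bound: "\<eta> * ((ln (?u y0) - ln (?u t)) / (2 * lam)) \<le> M" if at: "a < ereal t" and ty: "t \<le> y0" for t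
  proof -
    have tI: "t \<in> ?I" using key[OF at ty] by blast
    have kt: "\<And>s. s \<in> {t..y0} \<Longrightarrow> s \<in> ?I \<and> cmod (w s) < 2 \<and> ?u s > 0 \<and> 2 * \<eta>0 * lam * (p s * r s) \<le> (?u s)\<^sup>2"
      using key at by (auto intro: ereal_lt_trans2)
    have wb: "\<And>s. s \<in> {t..y0} \<Longrightarrow> cmod (w s) \<le> 2" using kt by (auto intro: less_imp_le)
    have upos: "\<And>s. s \<in> {t..y0} \<Longrightarrow> ?u s > 0" using kt by blast
    have Q: "(ln (?u y0) - ln (?u t)) / (2 * lam) \<le> integral {t..y0} (\<lambda>s. r s / ?u s)"
      by (rule Q_bound[OF lam tI y0I ty rpos rac w1ac N der1 wb upos])
    have Gy: "\<eta> / ?u y \<le> integral {y..c} (\<lambda>x. 1 / p x)" if y: "y \<in> {t..y0}" for y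
    proof -
      have ay: "a < ereal y" using at y by (auto intro: ereal_lt_trans2)
      have yI: "y \<in> ?I" using kt y by blast
      have yy0: "y \<le> y0" using y by simp
      have big': "\<And>s. s \<in> {y..y0} \<Longrightarrow> 2 * \<eta> * lam * (p s * r s) \<le> (?u s)\<^sup>2"
      proof -
        fix s assume s: "s \<in> {y..y0}"
        then have st: "s \<in> {t..y0}" using y by auto
        then have sI: "s \<in> ?I" using kt by blast
        then have "p s * r s > 0" using ppos rpos by auto
        then have "2 * \<eta> * lam * (p s * r s) \<le> 2 * \<eta>0 * lam * (p s * r s)"
          using etale lam by (intro mult_right_mono) auto
        also have "\<dots> \<le> (?u s)\<^sup>2" using kt[OF st] by blast
        finally show "2 * \<eta> * lam * (p s * r s) \<le> (?u s)\<^sup>2" .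
      qed
      have G: "\<eta> / ?u y \<le> integral {y..y0} (\<lambda>x. 1 / p x) + \<eta> / ?u y0"
        by (rule G_bound[OF lam eta yI y0I yy0 ppos rpos pac w1ac N der1])
           (use wb upos y big' in auto)
      have "\<eta> / ?u y0 \<le> \<Phi>0" using etale(2) uy0 by (simp add: divide_le_eq mult.commute)
      moreover have "integral {y..y0} (\<lambda>x. 1 / p x) + \<Phi>0 = integral {y..c} (\<lambda>x. 1 / p x)"
        unfolding \<Phi>0_def
      proof (rule Henstock_Kurzweil_Integration.integral_combine[OF yy0])
        show "y0 \<le> c" using y0c by simp
        have "continuous_on {y..c} p" by (rule cont_of_ac[OF pac yI cI])
        moreover have "\<forall>x\<in>{y..c}. p x \<noteq> 0" using ointerval_Icc[OF yI cI] ppos by fastforce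
        ultimately have "continuous_on {y..c} (\<lambda>x. 1 / p x)" by (intro continuous_intros) auto
        then show "(\<lambda>x. 1 / p x) integrable_on {y..c}" by (rule integrable_continuous_real)
      qed
      ultimately show ?thesis using G by linarith
    qed
    have tc: "{t..c} \<subseteq> ?I" by (rule ointerval_Icc[OF tI cI])
    have pcont: "continuous_on {t..c} (\<lambda>x. 1 / p x)"
    proof -
      have "continuous_on {t..c} p" by (rule cont_of_ac[OF pac tI cI])
      moreover have "\<forall>x\<in>{t..c}. p x \<noteq> 0" using tc ppos by fastforce
      ultimately show ?thesis by (intro continuous_intros) auto
    qed
    have rcont: "continuous_on {t..y0} r" by (rule cont_of_ac[OF rac tI y0I])
    have ucont: "continuous_on {t..y0} ?u"
      by (rule ac_continuous[OF ac_norm[OF locally_acD[OF w1ac tI y0I]]])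
    have hcont: "continuous_on {t..y0} (\<lambda>y. \<eta> * (r y / ?u y))"
      by (intro continuous_intros rcont ucont) (use upos in fastforce)
    have "integral {t..y0} (\<lambda>y. \<eta> * (r y / ?u y)) \<le> M"
    proof (rule outer_bound[OF _ M0 ty y0c at pcont])
      show "(\<integral>\<^sup>+ y\<in>{y. a < ereal y \<and> y < c}.
          (\<integral>\<^sup>+ x\<in>{y..c}. ennreal (1 / p x) \<partial>lborel) * ennreal (r y) \<partial>lborel) \<le> ennreal M"
        using TM by (simp add: T_def)
      show "\<And>x. x \<in> {t..c} \<Longrightarrow> p x > 0" using tc ppos by fastforce
      show "\<And>x. x \<in> {t..c} \<Longrightarrow> r x > 0" using tc rpos by fastforce
      show "continuous_on {t..y0} (\<lambda>y. \<eta> * (r y / ?u y))" by (rule hcont)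
      fix y assume y: "y \<in> {t..y0}"
      then have ry: "r y > 0" using kt rpos by blast
      have uy: "?u y > 0" using upos y by blast
      show "0 \<le> \<eta> * (r y / ?u y)" using eta ry uy by simp
      have "\<eta> * (r y / ?u y) = (\<eta> / ?u y) * r y" by simp
      also have "\<dots> \<le> integral {y..c} (\<lambda>x. 1 / p x) * r y"
        using Gy[OF y] ry by (intro mult_right_mono) auto
      finally show "\<eta> * (r y / ?u y) \<le> integral {y..c} (\<lambda>x. 1 / p x) * r y" .
    qed
    moreover have "integral {t..y0} (\<lambda>y. \<eta> * (r y / ?u y)) = \<eta> * integral {t..y0} (\<lambda>y. r y / ?u y)"
      by (rule integral_mult_right)
    ultimately have "\<eta> * integral {t..y0} (\<lambda>y. r y / ?u y) \<le> M" by simp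
    moreover have "\<eta> * ((ln (?u y0) - ln (?u t)) / (2 * lam)) \<le> \<eta> * integral {t..y0} (\<lambda>y. r y / ?u y)"
      using Q eta by (intro mult_left_mono) auto
    ultimately show ?thesis by linarith
  qed
  define K where "K = ?u y0 * exp (- (2 * lam * (M + 1) / \<eta>))"
  have K: "K > 0" using uy0 by (simp add: K_def)
  have ulim: "(?u \<longlongrightarrow> 0) (at_left_end a)" using tendsto_norm[OF w1lim] by simp
  have ev3: "eventually (\<lambda>t. ?u t < K) (at_left_end a)" by (rule order_tendstoD(2)[OF ulim K])
  obtain t where t: "t \<in> ?I \<and> t < y0" "?u t < K"
    using eventually_happens'[OF at_left_end_nontrivial[OF ab] eventually_conj[OF at_left_end_in[OF y0I] ev3]]
    by blast
  have at: "a < ereal t" using t by (simp add: ointerval_def)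
  have ty: "t \<le> y0" using t by simp
  have ut: "?u t > 0" using key[OF at ty] by blast
  have "ln (?u t) < ln K" using ut t(2) K by simp
  also have "ln K = ln (?u y0) - 2 * lam * (M + 1) / \<eta>" using uy0 by (simp add: K_def ln_mult)
  finally have "2 * lam * (M + 1) / \<eta> < ln (?u y0) - ln (?u t)" by simp
  then have "2 * lam * (M + 1) < \<eta> * (ln (?u y0) - ln (?u t))" using eta by (simp add: divide_less_eq mult.commute)
  then have "M + 1 < \<eta> * ((ln (?u y0) - ln (?u t)) / (2 * lam))" using lam by (simp add: field_simps)
  then show False using bound[OF at ty] by linarith
qed

lemma const_ac:
  fixes f :: "real \<Rightarrow> complex"
  assumes yx: "y \<le> x" and ac: "absolutely_continuous_on {y..x} f" and N: "negligible N"
    and d: "\<And>s. s \<in> {y<..<x} \<Longrightarrow> s \<notin> N \<Longrightarrow> (f has_vector_derivative 0) (at s)"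
  shows "f x = f y"
proof (rule complex_eqI)
  have dR: "\<And>s. s \<in> {y<..<x} \<Longrightarrow> s \<notin> N \<Longrightarrow> ((\<lambda>t. Re (f t)) has_real_derivative 0) (at s)"
    using Re_deriv[OF d] by simp
  have dI: "\<And>s. s \<in> {y<..<x} \<Longrightarrow> s \<notin> N \<Longrightarrow> ((\<lambda>t. Im (f t)) has_real_derivative 0) (at s)"
    using Im_deriv[OF d] by simp
  have "(\<lambda>t. Re (f t)) x \<le> (\<lambda>t. Re (f t)) y"
    by (rule ac_nonpos_deriv[OF yx ac_Re[OF ac] N]) (use dR in blast)
  moreover have "(\<lambda>t. Re (f t)) y \<le> (\<lambda>t. Re (f t)) x"
    by (rule ac_nonneg_deriv[OF yx ac_Re[OF ac] N]) (use dR in blast)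
  ultimately show "Re (f x) = Re (f y)" by simp
  have "(\<lambda>t. Im (f t)) x \<le> (\<lambda>t. Im (f t)) y"
    by (rule ac_nonpos_deriv[OF yx ac_Im[OF ac] N]) (use dI in blast)
  moreover have "(\<lambda>t. Im (f t)) y \<le> (\<lambda>t. Im (f t)) x"
    by (rule ac_nonneg_deriv[OF yx ac_Im[OF ac] N]) (use dI in blast)
  ultimately show "Im (f x) = Im (f y)" by simp
qed

lemma const_limit:
  fixes f :: "real \<Rightarrow> complex"
  assumes ab: "a < b" and x: "x \<in> ointerval a b"
    and const: "\<And>y. y \<in> ointerval a b \<Longrightarrow> y \<le> x \<Longrightarrow> f x = f y"
    and lim: "(f \<longlongrightarrow> L) (at_left_end a)"
  shows "f x = L"
proof -
  have "eventually (\<lambda>y. f y = f x) (at_left_end a)"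
    using at_left_end_in[OF x] by (rule eventually_mono) (use const in force)
  then have "(f \<longlongrightarrow> f x) (at_left_end a)" by (rule tendsto_eventually)
  then show ?thesis using tendsto_unique[OF at_left_end_nontrivial[OF ab] _ lim] by blast
qed

lemma main_zero:
  fixes a b :: ereal and p r :: "real \<Rightarrow> real" and w w1 :: "real \<Rightarrow> complex"
  assumes ab: "a < b"
    and wac: "locally_ac_on (ointerval a b) w" and w1ac: "locally_ac_on (ointerval a b) w1"
    and N: "negligible N"
    and der: "\<And>x. x \<in> ointerval a b \<Longrightarrow> x \<notin> N \<Longrightarrow>
       (w has_vector_derivative (w1 x / complex_of_real (p x))) (at x) \<and>
       (w1 has_vector_derivative (- (complex_of_real 0 * complex_of_real (r x) * w x))) (at x)"
    and wlim: "(w \<longlongrightarrow> 1) (at_left_end a)" and w1lim: "(w1 \<longlongrightarrow> 0) (at_left_end a)"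
    and x0: "x0 \<in> ointerval a b"
  shows "norm (w x0) \<le> 1"
proof -
  have w1c: "w1 x = w1 y" if y: "y \<in> ointerval a b" and x: "x \<in> ointerval a b" and yx: "y \<le> x" for x y
  proof (rule const_ac[OF yx locally_acD[OF w1ac y x] N])
    fix s assume s: "s \<in> {y<..<x}" "s \<notin> N"
    then have "s \<in> ointerval a b" using ointerval_Icc[OF y x] by auto
    then show "(w1 has_vector_derivative 0) (at s)" using der s(2) by auto
  qed
  have w10: "w1 x = 0" if x: "x \<in> ointerval a b" for x
    by (rule const_limit[OF ab x _ w1lim]) (use w1c x in blast)
  have wc: "w x = w y" if y: "y \<in> ointerval a b" and x: "x \<in> ointerval a b" and yx: "y \<le> x" for x y
  proof (rule const_ac[OF yx locally_acD[OF wac y x] N])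
    fix s assume s: "s \<in> {y<..<x}" "s \<notin> N"
    then have sI: "s \<in> ointerval a b" using ointerval_Icc[OF y x] by auto
    then have "(w has_vector_derivative (w1 s / complex_of_real (p s))) (at s)" using der s(2) by auto
    then show "(w has_vector_derivative 0) (at s)" using w10[OF sI] by simp
  qed
  have "w x0 = 1"
    by (rule const_limit[OF ab x0 _ wlim]) (use wc x0 in blast)
  then show ?thesis by simp
qed

theorem mainTheorem2:
  fixes a b :: ereal and p r :: "real \<Rightarrow> real" and c :: real
  assumes ab: "a < b"
    and p_pos: "\<forall>x\<in>ointerval a b. p x > 0"
    and r_pos: "\<forall>x\<in>ointerval a b. r x > 0"
    and p_ac: "locally_ac_on (ointerval a b) p"
    and p'_ac: "\<exists>p'. locally_ac_on (ointerval a b) p' \<and>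
                 (\<forall>x\<in>ointerval a b. (p has_real_derivative p' x) (at x))"
    and r_ac: "locally_ac_on (ointerval a b) r"
    and r'_ac: "\<exists>r'. locally_ac_on (ointerval a b) r' \<and>
                 (\<forall>x\<in>ointerval a b. (r has_real_derivative r' x) (at x))"
    and c_in: "c \<in> ointerval a b"
    and integrable_end:
      "(\<integral>\<^sup>+ y\<in>{y. a < ereal y \<and> y < c}.
          (\<integral>\<^sup>+ x\<in>{y..c}. ennreal (1 / p x) \<partial>lborel) * ennreal (r y) \<partial>lborel) < \<infinity>"
    and incr: "mono_on (ointerval a b) (\<lambda>x. p x * r x)"
  shows "\<forall>(lam::real) (w::real \<Rightarrow> complex) w1.
           lam \<ge> 0 \<and> sl_solution a b p r (complex_of_real lam) w w1 \<and>
           (w \<longlongrightarrow> 1) (at_left_end a) \<and> (w1 \<longlongrightarrow> 0) (at_left_end a)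
           \<longrightarrow> (\<forall>x\<in>ointerval a b. norm (w x) \<le> 1)"
proof (intro allI impI ballI)
  fix lam :: real and w w1 :: "real \<Rightarrow> complex" and x0
  assume H: "lam \<ge> 0 \<and> sl_solution a b p r (complex_of_real lam) w w1 \<and>
           (w \<longlongrightarrow> 1) (at_left_end a) \<and> (w1 \<longlongrightarrow> 0) (at_left_end a)"
    and x0: "x0 \<in> ointerval a b"
  have lam0: "lam \<ge> 0" and wlim: "(w \<longlongrightarrow> 1) (at_left_end a)" and w1lim: "(w1 \<longlongrightarrow> 0) (at_left_end a)"
    using H by auto
  have sol: "sl_solution a b p r (complex_of_real lam) w w1" using H by auto
  have wac: "locally_ac_on (ointerval a b) w" and w1ac: "locally_ac_on (ointerval a b) w1"
    and AE1: "AE x in lebesgue. x \<in> ointerval a b \<longrightarrow>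
        (w has_vector_derivative (w1 x / complex_of_real (p x))) (at x)"
    and AE2: "AE x in lebesgue. x \<in> ointerval a b \<longrightarrow>
        (w1 has_vector_derivative (- (complex_of_real lam * complex_of_real (r x) * w x))) (at x)"
    using sol unfolding sl_solution_def by auto
  have "AE x in lebesgue. x \<in> ointerval a b \<longrightarrow>
        (w has_vector_derivative (w1 x / complex_of_real (p x))) (at x) \<and>
        (w1 has_vector_derivative (- (complex_of_real lam * complex_of_real (r x) * w x))) (at x)"
    using AE1 AE2 by eventually_elim auto
  then obtain N where N: "N \<in> null_sets lebesgue"
    and NP: "{x \<in> space lebesgue. \<not> (x \<in> ointerval a b \<longrightarrow>
        (w has_vector_derivative (w1 x / complex_of_real (p x))) (at x) \<and>
        (w1 has_vector_derivative (- (complex_of_real lam * complex_of_real (r x) * w x))) (at x))} \<subseteq> N"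
    unfolding eventually_ae_filter by blast
  have negN: "negligible N" using N by (simp add: negligible_iff_null_sets)
  have der: "\<And>x. x \<in> ointerval a b \<Longrightarrow> x \<notin> N \<Longrightarrow>
       (w has_vector_derivative (w1 x / complex_of_real (p x))) (at x) \<and>
       (w1 has_vector_derivative (- (complex_of_real lam * complex_of_real (r x) * w x))) (at x)"
    using NP by auto
  obtain p' where pd: "\<forall>x\<in>ointerval a b. (p has_real_derivative p' x) (at x)" using p'_ac by blast
  obtain r' where rd: "\<forall>x\<in>ointerval a b. (r has_real_derivative r' x) (at x)" using r'_ac by blast
  show "norm (w x0) \<le> 1"
  proof (cases "lam = 0")
    case True
    show ?thesis
      by (rule main_zero[where p=p and r=r, OF ab wac w1ac negN _ wlim w1lim x0]) (use der True in simp)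
  next
    case False
    then have lam: "lam > 0" using lam0 by simp
    show ?thesis
      by (rule main_pos[OF ab lam p_pos r_pos p_ac r_ac pd rd c_in integrable_end incr wac w1ac negN der wlim w1lim x0])
  qed
qed

end
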